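(* Let $I\subset\mathbb{R}$ be a closed finite interval. Suppose $H\in C(\mathbb{T}^d\times\mathbb{R}^d\times I)$ satisfies (B1) and (B2), $k\in C(I\times I)$, and for $\alpha>0$ let $v^\alpha\in C(\mathbb{T}^d\times I)$ be the viscosity solution of (DP). Suppose there exist $c:I\to\mathbb{R}$ and $x_0\in\mathbb{T}^d$ such that, uniformly in $\xi\in I$, $$\lim_{\alpha\to0}\big(\alpha v^\alpha(x_0,\xi)+\Theta v^\alpha(x_0,\xi)\big)=-c(\xi).$$ Let $\tilde v^\alpha(x,\xi):=v^\alpha(x,\xi)-v^\alpha(x_0,\xi)$ and $$\overline v(x,\xi):=\lim_{r\to0}\sup\{\tilde v^\alpha(y,\eta): |x-y|+|\xi-\eta|+\alpha\le r\},\quad \underline v(x,\xi):=\lim_{r\to0}\inf\{\tilde v^\alpha(y,\eta): |x-y|+|\xi-\eta|+\alpha\le r\}$$ (with $\alpha>0$, $y\in\mathbb{T}^d$, $\eta\in I$). Then $\overline v$ is a viscosity subsolution and $\underline v$ a viscosity supersolution of $$H(x,Dv,\xi)+\int_I k(\xi,\eta)\big(v(x,\xi)-v(x,\eta)\big)\,d\eta=c(\xi)\quad\text{in }\mathbb{T}^d\times I.$$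
   Context: $|I|=1$; $0<k_0\le k\le k_1$. $\Theta v(x,\xi):=\int_I k(\xi,\eta)(v(x,\xi)-v(x,\eta))d\eta$. (DP): $\alpha v+H(x,Dv,\xi)+\Theta v=0$ in $\mathbb{T}^d\times I$ in the viscosity sense (test functions $\phi\in C^1(\mathbb{T}^d)$ touching $v(\cdot,\xi)$ at fixed $\xi$). (B1): $C_1|p|^m-C_2\le H(x,p,\xi)$ for constants $C_1,C_2>0$, $m>1$. (B2): for each $R>0$ a modulus $\omega_R$ with $|H(x,p,\xi)-H(y,p,\xi)|\le\omega_R(|x-y|)$ for $|p|\le R$. Sub/supersolution of $H+\Theta v=c(\xi)$: whenever $\phi\in C^1(\mathbb{T}^d)$, $\xi\in I$, $v(\cdot,\xi)-\phi$ has a local max (resp. min) at $\hat x$, then $H(\hat x,D\phi(\hat x),\xi)+\Theta v(\hat x,\xi)\le c(\xi)$ (resp. $\ge$). *)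

theory Defs
  imports "HOL-Analysis.Analysis"
begin

text \<open>Functions on the torus T^d = R^d / Z^d are represented as Z^d-periodic
  functions on R^d (type real^'d).\<close>

definition Zperiodic :: "(real^'d \<Rightarrow> 'b) \<Rightarrow> bool" where
  "Zperiodic f \<longleftrightarrow> (\<forall>x z. (\<forall>i. z $ i \<in> \<int>) \<longrightarrow> f (x + z) = f x)"

definition C1_torus :: "(real^'d \<Rightarrow> real) \<Rightarrow> (real^'d \<Rightarrow> real^'d) \<Rightarrow> bool" where
  "C1_torus \<phi> D\<phi> \<longleftrightarrow> Zperiodic \<phi> \<and>
     (\<forall>x. (\<phi> has_derivative (\<lambda>h. D\<phi> x \<bullet> h)) (at x)) \<and> continuous_on UNIV D\<phi>"

definition loc_max :: "('a::metric_space \<Rightarrow> real) \<Rightarrow> 'a \<Rightarrow> bool" where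
  "loc_max f x \<longleftrightarrow> (\<exists>e>0. \<forall>y. dist y x < e \<longrightarrow> f y \<le> f x)"

definition loc_min :: "('a::metric_space \<Rightarrow> real) \<Rightarrow> 'a \<Rightarrow> bool" where
  "loc_min f x \<longleftrightarrow> (\<exists>e>0. \<forall>y. dist y x < e \<longrightarrow> f x \<le> f y)"

definition modulus :: "(real \<Rightarrow> real) \<Rightarrow> bool" where
  "modulus \<omega> \<longleftrightarrow> \<omega> 0 = 0 \<and> (\<forall>r\<ge>0. \<omega> r \<ge> 0) \<and> mono_on {0..} \<omega> \<and>
     (\<omega> \<longlongrightarrow> 0) (at_right 0)"

definition Theta :: "real \<Rightarrow> real \<Rightarrow> (real \<Rightarrow> real \<Rightarrow> real) \<Rightarrow> (real^'d \<Rightarrow> real \<Rightarrow> real)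
    \<Rightarrow> real^'d \<Rightarrow> real \<Rightarrow> real" where
  "Theta a b k v x \<xi> = integral {a..b} (\<lambda>\<eta>. k \<xi> \<eta> * (v x \<xi> - v x \<eta>))"

definition visc_sub where
  "visc_sub a b H k c v \<longleftrightarrow> (\<forall>\<phi> D\<phi> \<xi> xh. C1_torus \<phi> D\<phi> \<longrightarrow> \<xi> \<in> {a..b} \<longrightarrow>
      loc_max (\<lambda>y. v y \<xi> - \<phi> y) xh \<longrightarrow>
      H xh (D\<phi> xh) \<xi> + Theta a b k v xh \<xi> \<le> c \<xi>)"

definition visc_super where
  "visc_super a b H k c v \<longleftrightarrow> (\<forall>\<phi> D\<phi> \<xi> xh. C1_torus \<phi> D\<phi> \<longrightarrow> \<xi> \<in> {a..b} \<longrightarrow>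
      loc_min (\<lambda>y. v y \<xi> - \<phi> y) xh \<longrightarrow>
      H xh (D\<phi> xh) \<xi> + Theta a b k v xh \<xi> \<ge> c \<xi>)"

definition DP_solution where
  "DP_solution a b H k \<alpha> v \<longleftrightarrow>
     (\<forall>\<xi>. Zperiodic (\<lambda>x. v x \<xi>)) \<and>
     continuous_on (UNIV \<times> {a..b}) (\<lambda>(x,\<xi>). v x \<xi>) \<and>
     (\<forall>\<phi> D\<phi> \<xi> xh. C1_torus \<phi> D\<phi> \<longrightarrow> \<xi> \<in> {a..b} \<longrightarrow>
        loc_max (\<lambda>y. v y \<xi> - \<phi> y) xh \<longrightarrow>
        \<alpha> * v xh \<xi> + H xh (D\<phi> xh) \<xi> + Theta a b k v xh \<xi> \<le> 0) \<and>
     (\<forall>\<phi> D\<phi> \<xi> xh. C1_torus \<phi> D\<phi> \<longrightarrow> \<xi> \<in> {a..b} \<longrightarrow>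
        loc_min (\<lambda>y. v y \<xi> - \<phi> y) xh \<longrightarrow>
        \<alpha> * v xh \<xi> + H xh (D\<phi> xh) \<xi> + Theta a b k v xh \<xi> \<ge> 0)"

definition relax_set :: "real \<Rightarrow> real \<Rightarrow> real^'d \<Rightarrow> real \<Rightarrow> real \<Rightarrow> (real \<times> (real^'d) \<times> real) set" where
  "relax_set a b x \<xi> r = {(\<alpha>, y, \<eta>). 0 < \<alpha> \<and> \<eta> \<in> {a..b} \<and> dist x y + \<bar>\<xi> - \<eta>\<bar> + \<alpha> \<le> r}"

definition upper_relax where
  "upper_relax a b v x0 x \<xi> = Lim (at_right (0::real))
     (\<lambda>r. SUP (\<alpha>, y, \<eta>) \<in> relax_set a b x \<xi> r. ereal (v \<alpha> y \<eta> - v \<alpha> x0 \<eta>))"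

definition lower_relax where
  "lower_relax a b v x0 x \<xi> = Lim (at_right (0::real))
     (\<lambda>r. INF (\<alpha>, y, \<eta>) \<in> relax_set a b x \<xi> r. ereal (v \<alpha> y \<eta> - v \<alpha> x0 \<eta>))"

end

theory Submission
  imports Defs
begin

definition tf :: "real^'d \<Rightarrow> real^'d \<Rightarrow> real \<Rightarrow> real^'d \<Rightarrow> real" where
  "tf z p A x = (\<Sum>i\<in>UNIV. p$i * (sin(2*pi*(x$i - z$i))/(2*pi)) + A * (sin(pi*(x$i - z$i)))\<^sup>2)"

definition dtf :: "real^'d \<Rightarrow> real^'d \<Rightarrow> real \<Rightarrow> real^'d \<Rightarrow> real^'d" where
  "dtf z p A x = (\<chi> i. p$i * cos(2*pi*(x$i - z$i)) + A * pi * sin(2*pi*(x$i - z$i)))"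

lemma deriv_comp1:
  "((\<lambda>t::real. p * (sin(2*pi*(t - c))/(2*pi)) + A * (sin(pi*(t - c)))\<^sup>2) has_real_derivative
     (p * cos(2*pi*(t - c)) + A * pi * sin(2*pi*(t - c)))) (at t)"
proof -
  have "((\<lambda>t::real. p * (sin(2*pi*(t - c))/(2*pi)) + A * (sin(pi*(t - c)))\<^sup>2) has_real_derivative
     (p * (cos(2*pi*(t - c)) * (2*pi*1) / (2*pi)) + A * (2 * sin(pi*(t-c)) * (cos(pi*(t-c)) * (pi*1))))) (at t)"
    by (auto intro!: derivative_eq_intros)
  moreover have "p * (cos(2*pi*(t - c)) * (2*pi*1) / (2*pi)) + A * (2 * sin(pi*(t-c)) * (cos(pi*(t-c)) * (pi*1)))
      = p * cos(2*pi*(t - c)) + A * pi * sin(2*pi*(t - c))"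
  proof -
    have "sin(2*pi*(t - c)) = 2 * sin(pi*(t-c)) * cos(pi*(t-c))"
      using sin_double[of "pi*(t-c)"] by (simp add: mult.assoc)
    then show ?thesis by (simp add: field_simps)
  qed
  ultimately show ?thesis by (rule DERIV_cong)
qed

lemma C1_tf: fixes z p :: "real^'d" shows "C1_torus (tf z p A) (dtf z p A)"
  unfolding C1_torus_def
proof (intro conjI allI)
  show "Zperiodic (tf z p A)"
    unfolding Zperiodic_def
  proof (intro allI impI)
    fix x w :: "real^'d" assume w: "\<forall>i. w $ i \<in> \<int>"
    have "sin(2*pi*((x+w)$i - z$i)) = sin(2*pi*(x$i - z$i))" for i
    proof -
      have "sin(2*pi*((x+w)$i - z$i)) = sin(2*pi*(x$i - z$i) + 2*pi*(w$i))"
        by (simp add: algebra_simps)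
      also have "\<dots> = sin(2*pi*(x$i - z$i))"
        using w by (simp add: sin_add sin_integer_2pi cos_integer_2pi)
      finally show ?thesis .
    qed
    moreover have "(sin(pi*((x+w)$i - z$i)))\<^sup>2 = (sin(pi*(x$i - z$i)))\<^sup>2" for i
    proof -
      obtain n where n: "w$i = of_int n" using w Ints_cases by metis
      have "sin(pi*((x+w)$i - z$i)) = sin(pi*(x$i - z$i) + of_int n * pi)"
        using n by (simp add: algebra_simps)
      also have "\<dots> = sin(pi*(x$i - z$i)) * cos (of_int n * pi)"
        by (simp add: sin_add sin_times_pi_eq_0)
      finally have "(sin(pi*((x+w)$i - z$i)))\<^sup>2 = (sin(pi*(x$i - z$i)))\<^sup>2 * (cos (of_int n * pi))\<^sup>2"
        by (simp add: power_mult_distrib)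
      moreover have "(cos (of_int n * pi))\<^sup>2 = 1"
      proof -
        have "sin (of_int n * pi) = 0" by (simp add: sin_times_pi_eq_0)
        then show ?thesis using sin_squared_eq[of "of_int n * pi"] by simp
      qed
      ultimately show ?thesis by simp
    qed
    ultimately show "tf z p A (x + w) = tf z p A x"
      unfolding tf_def by simp
  qed
next
  fix x :: "real^'d"
  have "((\<lambda>x. \<Sum>i\<in>UNIV. p$i * (sin(2*pi*(x$i - z$i))/(2*pi)) + A * (sin(pi*(x$i - z$i)))\<^sup>2) has_derivative
      (\<lambda>h. \<Sum>i\<in>UNIV. (p$i * cos(2*pi*(x$i - z$i)) + A * pi * sin(2*pi*(x$i - z$i))) * (h$i))) (at x)"
  proof (rule has_derivative_sum)
    fix i :: 'd
    have d1: "((\<lambda>t::real. p$i * (sin(2*pi*(t - z$i))/(2*pi)) + A * (sin(pi*(t - z$i)))\<^sup>2) has_derivative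
       (\<lambda>h. (p$i * cos(2*pi*(x$i - z$i)) + A * pi * sin(2*pi*(x$i - z$i))) * h)) (at (x$i))"
      using deriv_comp1[of "p$i" "z$i" A "x$i"] unfolding has_field_derivative_def by simp
    have d2: "((\<lambda>x::real^'d. x$i) has_derivative (\<lambda>h. h$i)) (at x)"
      by (rule bounded_linear_imp_has_derivative) (rule bounded_linear_vec_nth)
    show "((\<lambda>x. p$i * (sin(2*pi*(x$i - z$i))/(2*pi)) + A * (sin(pi*(x$i - z$i)))\<^sup>2) has_derivative
      (\<lambda>h. (p$i * cos(2*pi*(x$i - z$i)) + A * pi * sin(2*pi*(x$i - z$i))) * (h$i))) (at x)"
      using has_derivative_compose[OF d2 d1] by (simp add: o_def)
  qed
  then show "(tf z p A has_derivative (\<lambda>h. dtf z p A x \<bullet> h)) (at x)"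
    unfolding tf_def dtf_def inner_vec_def by simp
next
  show "continuous_on UNIV (dtf z p A)"
    unfolding dtf_def
    by (intro continuous_on_vec_lambda continuous_intros)
qed

lemma one_minus_cos_le: "1 - cos (s::real) \<le> s\<^sup>2 / 2"
proof -
  have "cos s = 1 - 2 * (sin (s/2))\<^sup>2" using cos_double_sin[of "s/2"] by simp
  moreover have "(sin (s/2))\<^sup>2 \<le> (s/2)\<^sup>2"
    using abs_sin_x_le_abs_x[of "s/2"] by (metis abs_ge_zero power2_abs power_mono)
  ultimately show ?thesis by (simp add: power_divide)
qed

lemma sin_ge_half: assumes "0 \<le> s" "s \<le> 1" shows "s / 2 \<le> sin (s::real)"
proof -
  have "(\<lambda>s. sin s - s/2) 0 \<le> (\<lambda>s. sin s - s/2) s"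
  proof (rule DERIV_nonneg_imp_nondecreasing[OF assms(1)])
    fix x assume x: "0 \<le> x" "x \<le> s"
    have "((\<lambda>s. sin s - s/2) has_real_derivative (cos x - 1/2)) (at x)"
      by (auto intro!: derivative_eq_intros)
    moreover have "0 \<le> cos x - 1/2"
    proof -
      have "x\<^sup>2 \<le> 1" using x assms by (simp add: power_le_one)
      then show ?thesis using one_minus_cos_le[of x] by simp
    qed
    ultimately show "\<exists>y. ((\<lambda>s. sin s - s/2) has_real_derivative y) (at x) \<and> 0 \<le> y" by blast
  qed
  then show ?thesis by simp
qed

lemma sin_sq_lower: assumes "\<bar>t\<bar> \<le> 1/4" shows "2 * t\<^sup>2 \<le> (sin (pi * t))\<^sup>2"
proof -
  have pi4: "pi / 4 < 1" using pi_less_4 by simp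
  have a: "\<bar>pi * t\<bar> \<le> 1"
  proof -
    have "\<bar>pi * t\<bar> = pi * \<bar>t\<bar>" by (simp add: abs_mult)
    also have "\<dots> \<le> pi * (1/4)" using assms by (intro mult_left_mono) auto
    finally show ?thesis using pi4 by simp
  qed
  have "\<bar>pi * t\<bar> / 2 \<le> \<bar>sin (pi * t)\<bar>"
  proof (cases "0 \<le> t")
    case True then show ?thesis using sin_ge_half[of "pi*t"] a by simp
  next
    case False
    have n: "pi * t \<le> 0" using False by (simp add: mult_nonneg_nonpos)
    have "-(pi*t) / 2 \<le> sin (-(pi*t))" using a n by (intro sin_ge_half) auto
    then show ?thesis using n by simp
  qed
  then have "(\<bar>pi * t\<bar> / 2)\<^sup>2 \<le> (sin (pi * t))\<^sup>2"
    by (metis abs_ge_zero divide_nonneg_nonneg power2_abs power_mono zero_le_numeral)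
  moreover have "(\<bar>pi * t\<bar> / 2)\<^sup>2 = pi\<^sup>2 * t\<^sup>2 / 4" by (simp add: power_divide power_mult_distrib)
  moreover have "8 \<le> pi\<^sup>2"
  proof -
    have "3 \<le> pi" using pi_gt3 by simp
    then have "3*3 \<le> pi * pi" by (intro mult_mono) auto
    then show ?thesis by (simp add: power2_eq_square)
  qed
  moreover have "8 * t\<^sup>2 \<le> pi\<^sup>2 * t\<^sup>2" using \<open>8 \<le> pi\<^sup>2\<close> by (intro mult_right_mono) auto
  ultimately show ?thesis by linarith
qed

lemma sin_lin_err: "\<bar>t - sin (2*pi*t) / (2*pi)\<bar> \<le> 2 * pi\<^sup>2 * \<bar>t\<bar>^3"
proof -
  define f where "f = (\<lambda>t::real. t - sin (2*pi*t) / (2*pi))"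
  have df: "(f has_real_derivative (1 - cos (2 * pi * s))) (at s)" for s
  proof -
    have "(f has_real_derivative (1 - cos (2 * pi * s) * (2*pi*1) / (2*pi))) (at s)"
      unfolding f_def by (auto intro!: derivative_eq_intros)
    then show ?thesis by simp
  qed
  have bnd: "\<bar>1 - cos (2 * pi * s)\<bar> \<le> 2 * pi\<^sup>2 * \<bar>t\<bar>\<^sup>2" if "\<bar>s\<bar> \<le> \<bar>t\<bar>" for s
  proof -
    have "1 - cos (2 * pi * s) \<le> (2 * pi * s)\<^sup>2/2" by (rule one_minus_cos_le)
    also have "\<dots> = 2 * pi\<^sup>2 * \<bar>s\<bar>\<^sup>2" by (simp add: power_mult_distrib)
    also have "\<dots> \<le> 2 * pi\<^sup>2 * \<bar>t\<bar>\<^sup>2" using that by (intro mult_left_mono power_mono) auto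
    finally show ?thesis using cos_le_one[of "2 * pi * s"] by simp
  qed
  have "\<bar>f t - f 0\<bar> \<le> 2 * pi\<^sup>2 * \<bar>t\<bar>^3"
  proof (cases "t = 0")
    case True then show ?thesis by simp
  next
    case False
    show ?thesis
    proof (cases "0 < t")
      case True
      obtain z where z: "0 < z" "z < t" "f t - f 0 = (t - 0) * (1 - cos (2 * pi * z))"
        using MVT2[OF True, of f "\<lambda>s. 1 - cos (2 * pi * s)"] df by blast
      have "\<bar>f t - f 0\<bar> = \<bar>t\<bar> * \<bar>1 - cos (2 * pi * z)\<bar>" using z by (simp add: abs_mult)
      also have "\<dots> \<le> \<bar>t\<bar> * (2 * pi\<^sup>2 * \<bar>t\<bar>\<^sup>2)" using z bnd[of z] by (intro mult_left_mono) auto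
      finally show ?thesis by (simp add: power2_eq_square power3_eq_cube mult_ac)
    next
      case False
      then have tn: "t < 0" using \<open>t \<noteq> 0\<close> by simp
      obtain z where z: "t < z" "z < 0" "f 0 - f t = (0 - t) * (1 - cos (2 * pi * z))"
        using MVT2[OF tn, of f "\<lambda>s. 1 - cos (2 * pi * s)"] df by blast
      have "\<bar>f t - f 0\<bar> = \<bar>t\<bar> * \<bar>1 - cos (2 * pi * z)\<bar>" using z by (simp add: abs_mult abs_minus_commute)
      also have "\<dots> \<le> \<bar>t\<bar> * (2 * pi\<^sup>2 * \<bar>t\<bar>\<^sup>2)" using z bnd[of z] by (intro mult_left_mono) auto
      finally show ?thesis by (simp add: power2_eq_square power3_eq_cube mult_ac)
    qed
  qed
  then show ?thesis unfolding f_def by simp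
qed

lemma tf_at_center: "tf z p A z = 0"
  unfolding tf_def by simp

lemma dtf_at_center: "dtf z p A z = p"
  unfolding dtf_def by (simp add: vec_eq_iff)

lemma norm_add_le_quad:
  fixes u h :: "'a::real_inner"
  assumes r: "norm u = r" "0 < r" "norm h \<le> r"
  shows "norm (u + h) \<le> r + inner u h / r + (norm h)\<^sup>2 / r"
proof -
  have cs: "\<bar>inner u h\<bar> \<le> r * norm h" using Cauchy_Schwarz_ineq2[of u h] r by simp
  have q: "\<bar>inner u h / r\<bar> \<le> norm h" using cs r by (simp add: abs_div pos_divide_le_eq mult.commute)
  define q where "q = inner u h / r"
  define s where "s = (norm h)\<^sup>2 / r"
  have s0: "0 \<le> s" unfolding s_def using r by simp
  have nonneg: "0 \<le> r + q + s" using q r s0 unfolding q_def by linarith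
  have "(norm (u + h))\<^sup>2 = (norm u)\<^sup>2 + 2 * inner u h + (norm h)\<^sup>2"
    by (simp add: power2_norm_eq_inner inner_add_left inner_add_right inner_commute)
  also have "\<dots> = r\<^sup>2 + 2 * inner u h + (norm h)\<^sup>2" using r by simp
  also have "\<dots> \<le> (r + q + s)\<^sup>2"
  proof -
    have "(r + q + s)\<^sup>2 = r\<^sup>2 + 2 * r * q + 2 * r * s + (q + s)\<^sup>2" by (simp add: power2_eq_square algebra_simps)
    moreover have "2 * r * q = 2 * inner u h" unfolding q_def using r by simp
    moreover have "2 * r * s = 2 * (norm h)\<^sup>2" unfolding s_def using r by simp
    ultimately show ?thesis by (simp add: add_nonneg_nonneg)
  qed
  finally have "(norm (u + h))\<^sup>2 \<le> (r + q + s)\<^sup>2" .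
  then have "norm (u + h) \<le> r + q + s" using nonneg by (simp add: power2_le_iff_abs_le)
  then show ?thesis unfolding q_def s_def .
qed

lemma cone_dom:
  fixes xh y' x :: "real^'d" and L :: real
  assumes r0: "0 < dist xh y'" and L0: "0 \<le> L"
    and near: "dist x xh < min (dist xh y') (1/4)"
  shows "L * (dist x y' - dist xh y') \<le>
     tf xh ((L / dist xh y') *\<^sub>R (xh - y')) (4 * L + L / dist xh y') x"
proof -
  define r where "r = dist xh y'"
  define u where "u = xh - y'"
  define h where "h = x - xh"
  define p where "p = (L / r) *\<^sub>R u"
  define A where "A = 4 * L + L / r"
  have r0': "0 < r" using r0 r_def by simp
  have nu: "norm u = r" unfolding u_def r_def by (simp add: dist_norm)
  have nh: "norm h < min r (1/4)" using near unfolding h_def r_def by (simp add: dist_norm)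
  have np: "norm p = L" unfolding p_def using nu r0' L0 by simp
  have nsq: "(norm h)\<^sup>2 = (\<Sum>i\<in>UNIV. (h$i)\<^sup>2)"
  proof -
    have "(norm h)\<^sup>2 = h \<bullet> h" by (rule power2_norm_eq_inner)
    then show ?thesis by (simp add: inner_vec_def power2_eq_square)
  qed
  have dxy: "dist x y' = norm (u + h)" unfolding u_def h_def by (simp add: dist_norm)
  have "norm (u + h) \<le> r + inner u h / r + (norm h)\<^sup>2 / r"
    using norm_add_le_quad[of u r h] nu r0' nh by simp
  then have "L * (dist x y' - r) \<le> L * (inner u h / r + (norm h)\<^sup>2 / r)"
    using dxy L0 by (intro mult_left_mono) auto
  also have "\<dots> = inner p h + (L / r) * (norm h)\<^sup>2"
    unfolding p_def by (simp add: algebra_simps)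
  also have "\<dots> = (\<Sum>i\<in>UNIV. p$i * h$i + (L/r) * (h$i)\<^sup>2)"
  proof -
    have "inner p h = (\<Sum>i\<in>UNIV. p$i * h$i)" by (simp add: inner_vec_def)
    moreover have "(L / r) * (norm h)\<^sup>2 = (\<Sum>i\<in>UNIV. (L/r) * (h$i)\<^sup>2)"
      unfolding nsq by (rule sum_distrib_left)
    ultimately show ?thesis by (simp only: sum.distrib)
  qed
  also have "\<dots> \<le> (\<Sum>i\<in>UNIV. p$i * (sin(2*pi*(h$i))/(2*pi)) + A * (sin(pi*(h$i)))\<^sup>2)"
  proof (rule sum_mono)
    fix i
    have hi: "\<bar>h$i\<bar> \<le> 1/4" using component_le_norm_cart[of h i] nh by simp
    have pi': "\<bar>p$i\<bar> \<le> L" using component_le_norm_cart[of p i] np by simp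
    have e1: "p$i * (h$i - sin(2*pi*(h$i))/(2*pi)) \<le> L * (2 * pi\<^sup>2 * \<bar>h$i\<bar>^3)"
    proof -
      have "p$i * (h$i - sin(2*pi*(h$i))/(2*pi)) \<le> \<bar>p$i\<bar> * \<bar>h$i - sin(2*pi*(h$i))/(2*pi)\<bar>"
        by (metis abs_ge_self abs_mult)
      also have "\<dots> \<le> L * (2 * pi\<^sup>2 * \<bar>h$i\<bar>^3)"
        using sin_lin_err[of "h$i"] pi' L0 by (intro mult_mono) auto
      finally show ?thesis .
    qed
    have e2: "2 * pi\<^sup>2 * \<bar>h$i\<bar>^3 \<le> 8 * (h$i)\<^sup>2"
    proof -
      have "pi * pi \<le> 4 * 4" using pi_less_4 pi_gt_zero by (intro mult_mono) auto
      then have "pi\<^sup>2 \<le> 16" by (simp add: power2_eq_square)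
      have "2 * pi\<^sup>2 * \<bar>h$i\<bar>^3 = 2 * pi\<^sup>2 * \<bar>h$i\<bar> * (h$i)\<^sup>2"
        by (simp add: power2_eq_square power3_eq_cube)
      also have "\<dots> \<le> 2 * 16 * (1/4) * (h$i)\<^sup>2"
        using \<open>pi\<^sup>2 \<le> 16\<close> hi by (intro mult_right_mono mult_mono) auto
      finally show ?thesis by simp
    qed
    have e3: "2 * (h$i)\<^sup>2 \<le> (sin(pi*(h$i)))\<^sup>2" using sin_sq_lower hi by simp
    have A0: "0 \<le> A" unfolding A_def using L0 r0' by simp
    have "p$i * h$i + (L/r) * (h$i)\<^sup>2 \<le> p$i * (sin(2*pi*(h$i))/(2*pi)) + 8 * L * (h$i)\<^sup>2 + (L/r) * (h$i)\<^sup>2"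
      using e1 e2 L0 mult_left_mono[OF e2 L0] by (simp add: algebra_simps)
    also have "\<dots> \<le> p$i * (sin(2*pi*(h$i))/(2*pi)) + A * (2 * (h$i)\<^sup>2)"
    proof -
      have "0 \<le> (L/r)*(h$i)\<^sup>2" using L0 r0' by simp
      moreover have "A * (2 * (h$i)\<^sup>2) = 8 * L * (h$i)\<^sup>2 + 2 * ((L/r)*(h$i)\<^sup>2)"
        unfolding A_def by (simp add: algebra_simps)
      ultimately show ?thesis by linarith
    qed
    also have "\<dots> \<le> p$i * (sin(2*pi*(h$i))/(2*pi)) + A * (sin(pi*(h$i)))\<^sup>2"
      using mult_left_mono[OF e3 A0] by simp
    finally show "p$i * h$i + (L/r) * (h$i)\<^sup>2 \<le> p$i * (sin(2*pi*(h$i))/(2*pi)) + A * (sin(pi*(h$i)))\<^sup>2" .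
  qed
  also have "\<dots> = tf xh p A x" unfolding tf_def h_def by simp
  finally show ?thesis unfolding p_def A_def u_def r_def .
qed

lemma per_reduce:
  fixes x :: "real^'d"
  assumes "Zperiodic f"
  shows "\<exists>x'\<in>cbox 0 1. f x = f x'"
proof -
  define x' where "x' = (\<chi> i. frac (x$i))"
  define z :: "real^'d" where "z = (\<chi> i. of_int \<lfloor>x$i\<rfloor>)"
  have "x = x' + z" unfolding x'_def z_def by (simp add: vec_eq_iff frac_def)
  moreover have "\<forall>i. z$i \<in> \<int>" unfolding z_def by simp
  ultimately have "f x = f x'" using assms unfolding Zperiodic_def by metis
  moreover have "x' \<in> cbox 0 1" unfolding x'_def mem_box_cart
    by (simp add: frac_ge_0 less_imp_le[OF frac_lt_1])
  ultimately show ?thesis by blast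
qed

lemma per_attains_max:
  fixes f :: "real^'d \<Rightarrow> real"
  assumes "continuous_on UNIV f" "Zperiodic f"
  shows "\<exists>xm. \<forall>x. f x \<le> f xm"
proof -
  have "compact (cbox (0::real^'d) 1)" by simp
  moreover have "(0::real^'d) \<in> cbox 0 1" by (simp add: mem_box_cart)
  then have "cbox (0::real^'d) 1 \<noteq> {}" by blast
  moreover have "continuous_on (cbox 0 1) f" using assms(1) continuous_on_subset by blast
  ultimately obtain xm where xm: "xm \<in> cbox 0 1" "\<forall>y\<in>cbox 0 1. f y \<le> f xm"
    using continuous_attains_sup by blast
  have "f x \<le> f xm" for x using per_reduce[OF assms(2), of x] xm by auto
  then show ?thesis by blast
qed

definition latY :: "real^'d \<Rightarrow> (real^'d) set" where
  "latY y = {w. \<forall>i. w$i - y$i \<in> \<int>}"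

lemma latY_closed: fixes y :: "real^'d" shows "closed (latY y)"
proof -
  have "latY y = (\<Inter>i. (\<lambda>w. w$i - y$i) -` \<int>)" unfolding latY_def by auto
  moreover have "closed ((\<lambda>w::real^'d. w$i - y$i) -` \<int>)" for i
    by (intro closed_vimage closed_Ints continuous_intros)
  ultimately show ?thesis by (simp add: closed_INT)
qed

lemma latY_ne: "y \<in> latY y" unfolding latY_def by simp

lemma latY_shift: "w \<in> latY y \<Longrightarrow> \<forall>i. z$i \<in> \<int> \<Longrightarrow> w + z \<in> latY y"
  unfolding latY_def
proof (intro CollectI allI, elim CollectE)
  fix i assume "\<forall>i. w $ i - y $ i \<in> \<int>" "\<forall>i. z $ i \<in> \<int>"
  then have "(w$i - y$i) + z$i \<in> \<int>" by (intro Ints_add) auto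
  moreover have "(w + z)$i - y$i = (w$i - y$i) + z$i" by simp
  ultimately show "(w + z)$i - y$i \<in> \<int>" by metis
qed

lemma infdist_latY_shift_le:
  fixes x z :: "real^'d"
  assumes z: "\<forall>i. z$i \<in> \<int>"
  shows "infdist (x + z) (latY y) \<le> infdist x (latY y)"
proof -
  obtain w where w: "w \<in> latY y" "infdist x (latY y) = dist x w"
    using infdist_attains_inf[OF latY_closed] latY_ne by blast
  have "infdist (x + z) (latY y) \<le> dist (x + z) (w + z)"
    using latY_shift[OF w(1) z] by (rule infdist_le)
  also have "\<dots> = dist x w" by (simp add: dist_norm)
  finally show ?thesis using w by simp
qed

lemma infdist_latY_per: "Zperiodic (\<lambda>x. infdist x (latY y))"
  unfolding Zperiodic_def
proof (intro allI impI)
  fix x z :: "real^'a" assume z: "\<forall>i. z$i \<in> \<int>"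
  have mz: "\<forall>i. (-z)$i \<in> \<int>" using z by simp
  show "infdist (x + z) (latY y) = infdist x (latY y)"
    using infdist_latY_shift_le[OF z, of x y] infdist_latY_shift_le[OF mz, of "x+z" y] by simp
qed

lemma infdist_latY_le: "infdist x (latY y) \<le> real CARD('d)" for x y :: "real^'d"
proof -
  define w where "w = x - (\<chi> i. frac (x$i - y$i))"
  have "w \<in> latY y" unfolding latY_def
  proof (intro CollectI allI)
    fix i
    have "w$i - y$i = of_int \<lfloor>x$i - y$i\<rfloor>" unfolding w_def by (simp add: frac_def)
    then show "w$i - y$i \<in> \<int>" by simp
  qed
  then have "infdist x (latY y) \<le> dist x w" by (rule infdist_le)
  also have "\<dots> = norm (\<chi> i. frac (x$i - y$i))" unfolding w_def by (simp add: dist_norm)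
  also have "\<dots> \<le> (\<Sum>i\<in>UNIV. \<bar>(\<chi> i. frac (x$i - y$i)) $ i\<bar>)" by (rule norm_le_l1_cart)
  also have "\<dots> \<le> (\<Sum>i\<in>(UNIV::'d set). (1::real))"
  proof (intro sum_mono)
    fix i :: 'd
    show "\<bar>(\<chi> i. frac (x$i - y$i)) $ i\<bar> \<le> 1"
      using frac_ge_0[of "x$i - y$i"] frac_lt_1[of "x$i - y$i"] by simp
  qed
  also have "(\<Sum>i\<in>(UNIV::'d set). (1::real)) = real CARD('d)" by simp
  finally show ?thesis .
qed

lemma osc_bound:
  fixes u :: "real^'d \<Rightarrow> real" and L :: real
  assumes cont: "continuous_on UNIV u" and per: "Zperiodic u" and L0: "0 \<le> L"
    and grad: "\<And>\<phi> D\<phi> xh. C1_torus \<phi> D\<phi> \<Longrightarrow> loc_max (\<lambda>y. u y - \<phi> y) xh \<Longrightarrow> norm (D\<phi> xh) \<le> L"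
  shows "u x - u y \<le> (L + 1) * real CARD('d)"
proof -
  define L' where "L' = L + 1"
  have L'0: "0 < L'" using L0 L'_def by simp
  define g where "g = (\<lambda>x. u x - L' * infdist x (latY y))"
  have ci: "continuous_on UNIV (\<lambda>x. infdist x (latY y))"
    by (rule continuous_on_infdist) (rule continuous_on_id)
  have gc: "continuous_on UNIV g" unfolding g_def
    by (intro continuous_on_diff cont continuous_on_mult ci continuous_on_const)
  have gp: "Zperiodic g" unfolding Zperiodic_def g_def
  proof (intro allI impI)
    fix x z :: "real^'d" assume z: "\<forall>i. z$i \<in> \<int>"
    have "u (x+z) = u x" using per z unfolding Zperiodic_def by blast
    moreover have "infdist (x+z) (latY y) = infdist x (latY y)"
      using infdist_latY_per[of y] z unfolding Zperiodic_def by blast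
    ultimately show "u (x + z) - L' * infdist (x + z) (latY y) = u x - L' * infdist x (latY y)" by simp
  qed
  obtain xm where xm: "\<And>x. g x \<le> g xm" using per_attains_max[OF gc gp] by blast
  show ?thesis
  proof (cases "infdist xm (latY y) = 0")
    case True
    then have "xm \<in> latY y" using in_closed_iff_infdist_zero[OF latY_closed, of y xm] latY_ne by blast
    then have z: "\<forall>i. (xm - y)$i \<in> \<int>" unfolding latY_def by simp
    have "u (y + (xm - y)) = u y" using per z unfolding Zperiodic_def by blast
    then have "u xm = u y" by simp
    then have "g xm = u y" using True g_def by simp
    then have "u x \<le> u y + L' * infdist x (latY y)" using xm[of x] unfolding g_def by simp
    also have "\<dots> \<le> u y + L' * real CARD('d)"
      using infdist_latY_le[of x y] L'0 by (intro add_left_mono mult_left_mono) auto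
    finally show ?thesis unfolding L'_def by simp
  next
    case False
    then have r0: "0 < infdist xm (latY y)" using infdist_nonneg[of xm "latY y"] by simp
    obtain y' where y': "y' \<in> latY y" "infdist xm (latY y) = dist xm y'"
      using infdist_attains_inf[OF latY_closed] latY_ne by blast
    define r where "r = dist xm y'"
    have r0': "0 < dist xm y'" using r0 y' by simp
    define p where "p = (L' / dist xm y') *\<^sub>R (xm - y')"
    define A where "A = 4 * L' + L' / dist xm y'"
    have lm: "loc_max (\<lambda>x. u x - tf xm p A x) xm"
      unfolding loc_max_def
    proof (intro exI[of _ "min (dist xm y') (1/4)"] conjI allI impI)
      show "0 < min (dist xm y') (1/4)" using r0' by simp
      fix x assume x: "dist x xm < min (dist xm y') (1/4)"
      have "g x \<le> g xm" by (rule xm)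
      then have "u x - u xm \<le> L' * infdist x (latY y) - L' * infdist xm (latY y)" unfolding g_def by simp
      also have "\<dots> \<le> L' * (dist x y' - dist xm y')"
        using infdist_le[OF y'(1), of x] y'(2) L'0 by (simp add: algebra_simps)
      also have "\<dots> \<le> tf xm p A x" unfolding p_def A_def
        by (rule cone_dom[OF r0' less_imp_le[OF L'0] x])
      finally show "u x - tf xm p A x \<le> u xm - tf xm p A xm" by (simp add: tf_at_center)
    qed
    have "norm (dtf xm p A xm) \<le> L" using grad[OF C1_tf lm] .
    moreover have "norm (dtf xm p A xm) = L'"
      unfolding dtf_at_center p_def using r0' L'0 by (simp add: dist_norm)
    ultimately show ?thesis using L'_def by simp
  qed
qed

lemma powr_split_bound:
  fixes t T \<beta> :: real
  assumes t: "0 \<le> t" and T: "0 < T" and b: "0 < \<beta>" "\<beta> < 1"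
  shows "t powr \<beta> \<le> T powr \<beta> + T powr (\<beta> - 1) * t"
proof (cases "t \<le> T")
  case True
  then have "t powr \<beta> \<le> T powr \<beta>" using t b by (intro powr_mono2) auto
  moreover have "0 \<le> T powr (\<beta> - 1) * t" using t by simp
  ultimately show ?thesis by linarith
next
  case False
  then have tp: "0 < t" "T < t" using T by auto
  have "t powr (\<beta> - 1) * t = t powr (\<beta> - 1) * t powr 1" using tp by simp
  also have "\<dots> = t powr \<beta>" by (simp only: powr_add[symmetric]) simp
  finally have "t powr \<beta> = t powr (\<beta> - 1) * t" by simp
  also have "\<dots> \<le> T powr (\<beta> - 1) * t"
  proof (rule mult_right_mono)
    show "t powr (\<beta> - 1) \<le> T powr (\<beta> - 1)" using powr_mono2'[of "\<beta> - 1" T t] b T tp by simp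
  qed (use t in simp)
  moreover have "0 \<le> T powr \<beta>" by simp
  ultimately show ?thesis by linarith
qed

lemma sublin:
  fixes Om P Q R S \<beta> :: real
  assumes nn: "0 \<le> P" "0 \<le> Q" "0 \<le> R" "0 \<le> S" and b: "0 < \<beta>" "\<beta> < 1"
    and O0: "0 \<le> Om" and ineq: "Om \<le> P + Q * (R + S * Om) powr \<beta>"
  shows "Om \<le> 2 * (P + Q * ((2*Q*S+1) powr (1/(1-\<beta>))) powr \<beta>
                   + Q * ((2*Q*S+1) powr (1/(1-\<beta>))) powr (\<beta> - 1) * R)"
proof -
  define T where "T = (2*Q*S+1) powr (1/(1-\<beta>))"
  have QS: "0 \<le> Q * S" using nn by simp
  then have QS1: "0 < 2*Q*S+1" by simp
  have T0: "0 < T" unfolding T_def using QS1 by simp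
  have Tb: "T powr (\<beta> - 1) = 1 / (2*Q*S+1)"
  proof -
    have "T powr (\<beta> - 1) = (2*Q*S+1) powr ((1/(1-\<beta>)) * (\<beta> - 1))" unfolding T_def by (rule powr_powr)
    also have "(1/(1-\<beta>)) * (\<beta> - 1) = -1" using b by (simp add: field_simps)
    finally show ?thesis using QS1 by (simp add: powr_minus_divide)
  qed
  have t0: "0 \<le> R + S * Om" using nn O0 by simp
  have "(R + S * Om) powr \<beta> \<le> T powr \<beta> + T powr (\<beta> - 1) * (R + S * Om)"
    by (rule powr_split_bound[OF t0 T0 b])
  then have "Om \<le> P + Q * (T powr \<beta> + T powr (\<beta> - 1) * (R + S * Om))"
    using ineq nn(2) by (smt (verit) mult_left_mono)
  also have "\<dots> = P + Q * T powr \<beta> + Q * T powr (\<beta> - 1) * R + (Q * S / (2*Q*S+1)) * Om"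
    unfolding Tb by (simp add: algebra_simps add_divide_distrib)
  also have "(Q * S / (2*Q*S+1)) * Om \<le> (1/2) * Om"
  proof (rule mult_right_mono)
    have "Q * S \<le> (1/2) * (2*Q*S+1)" by simp
    then show "Q * S / (2*Q*S+1) \<le> 1/2" using QS1 by (simp add: divide_le_eq mult.commute)
  qed (use O0 in simp)
  finally show ?thesis unfolding T_def by simp
qed

lemma cont_slice_eta:
  fixes a b :: real and v :: "real^'d \<Rightarrow> real \<Rightarrow> real"
  assumes "continuous_on (UNIV \<times> {a..b}) (\<lambda>(x, \<xi>). v x \<xi>)"
  shows "continuous_on {a..b} (v x)"
proof -
  have "continuous_on {a..b} (\<lambda>\<eta>. (\<lambda>(x, \<xi>). v x \<xi>) (x, \<eta>))"
    by (rule continuous_on_compose2[OF assms]) (auto intro!: continuous_intros)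
  then show ?thesis by simp
qed

lemma cont_slice_x:
  fixes a b :: real and v :: "real^'d \<Rightarrow> real \<Rightarrow> real"
  assumes "continuous_on (UNIV \<times> {a..b}) (\<lambda>(x, \<xi>). v x \<xi>)" "\<xi> \<in> {a..b}"
  shows "continuous_on UNIV (\<lambda>x. v x \<xi>)"
proof -
  have "continuous_on UNIV (\<lambda>x. (\<lambda>(x, \<xi>). v x \<xi>) (x, \<xi>))"
    by (rule continuous_on_compose2[OF assms(1)]) (use assms(2) in \<open>auto intro!: continuous_intros\<close>)
  then show ?thesis by simp
qed

lemma cont_k_slice:
  fixes a b :: real and k :: "real \<Rightarrow> real \<Rightarrow> real"
  assumes "continuous_on ({a..b} \<times> {a..b}) (\<lambda>(\<xi>, \<eta>). k \<xi> \<eta>)" "\<xi> \<in> {a..b}"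
  shows "continuous_on {a..b} (k \<xi>)"
proof -
  have "continuous_on {a..b} (\<lambda>\<eta>. (\<lambda>(\<xi>, \<eta>). k \<xi> \<eta>) (\<xi>, \<eta>))"
    by (rule continuous_on_compose2[OF assms(1)]) (use assms(2) in \<open>auto intro!: continuous_intros\<close>)
  then show ?thesis by simp
qed

lemma Theta_integrable:
  fixes a b :: real and k :: "real \<Rightarrow> real \<Rightarrow> real" and v :: "real^'d \<Rightarrow> real \<Rightarrow> real"
  assumes "continuous_on {a..b} (k \<xi>)" "continuous_on {a..b} (v x)"
  shows "(\<lambda>\<eta>. k \<xi> \<eta> * (v x \<xi> - v x \<eta>)) integrable_on {a..b}"
proof (rule integrable_continuous_interval)
  show "continuous_on {a..b} (\<lambda>\<eta>. k \<xi> \<eta> * (v x \<xi> - v x \<eta>))"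
    using continuous_on_mult[OF assms(1) continuous_on_diff[OF continuous_on_const assms(2)]] by simp
qed

lemma Theta_split:
  fixes a b :: real and k :: "real \<Rightarrow> real \<Rightarrow> real" and v :: "real^'d \<Rightarrow> real \<Rightarrow> real"
  assumes kc: "continuous_on {a..b} (k \<xi>)"
    and c1: "continuous_on {a..b} (v x)" and c2: "continuous_on {a..b} (v x0)"
  shows "Theta a b k v x \<xi> = Theta a b k (\<lambda>x \<xi>. v x \<xi> - v x0 \<xi>) x \<xi> + Theta a b k v x0 \<xi>"
proof -
  have c3: "continuous_on {a..b} (\<lambda>\<eta>. v x \<eta> - v x0 \<eta>)" by (rule continuous_on_diff[OF c1 c2])
  have i1: "(\<lambda>\<eta>. k \<xi> \<eta> * ((v x \<xi> - v x0 \<xi>) - (v x \<eta> - v x0 \<eta>))) integrable_on {a..b}"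
    using Theta_integrable[of a b k \<xi> "\<lambda>x \<eta>. v x \<eta> - v x0 \<eta>" x, OF kc c3] by simp
  have i2: "(\<lambda>\<eta>. k \<xi> \<eta> * (v x0 \<xi> - v x0 \<eta>)) integrable_on {a..b}"
    using Theta_integrable[of a b k \<xi> v x0, OF kc c2] .
  have "Theta a b k v x \<xi> = integral {a..b} (\<lambda>\<eta>. k \<xi> \<eta> * ((v x \<xi> - v x0 \<xi>) - (v x \<eta> - v x0 \<eta>)) + k \<xi> \<eta> * (v x0 \<xi> - v x0 \<eta>))"
  proof -
    have "(\<lambda>\<eta>. k \<xi> \<eta> * (v x \<xi> - v x \<eta>)) = (\<lambda>\<eta>. k \<xi> \<eta> * ((v x \<xi> - v x0 \<xi>) - (v x \<eta> - v x0 \<eta>)) + k \<xi> \<eta> * (v x0 \<xi> - v x0 \<eta>))"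
      by (rule ext) (simp add: right_diff_distrib distrib_left)
    then show ?thesis unfolding Theta_def by (rule arg_cong)
  qed
  also have "\<dots> = Theta a b k (\<lambda>x \<xi>. v x \<xi> - v x0 \<xi>) x \<xi> + Theta a b k v x0 \<xi>"
    unfolding Theta_def by (rule integral_add[OF i1 i2])
  finally show ?thesis .
qed

lemma integral_ge_const:
  fixes g :: "real \<Rightarrow> real"
  assumes "b - a = 1" "g integrable_on {a..b}" "\<And>\<eta>. \<eta> \<in> {a..b} \<Longrightarrow> c \<le> g \<eta>"
  shows "c \<le> integral {a..b} g"
proof -
  have ic: "(\<lambda>_. c) integrable_on {a..b}" by (rule integrable_continuous_interval) (rule continuous_on_const)
  have "integral {a..b} (\<lambda>_. c) \<le> integral {a..b} g"
    by (rule integral_le[OF ic assms(2)]) (rule assms(3))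
  moreover have "integral {a..b} (\<lambda>_. c) = c"
  proof -
    have ab: "a \<le> b" using assms(1) by simp
    then show ?thesis using assms(1) by (simp add: content_real)
  qed
  ultimately show ?thesis by linarith
qed

lemma integral_le_const:
  fixes g :: "real \<Rightarrow> real"
  assumes "b - a = 1" "g integrable_on {a..b}" "\<And>\<eta>. \<eta> \<in> {a..b} \<Longrightarrow> g \<eta> \<le> c"
  shows "integral {a..b} g \<le> c"
proof -
  have ic: "(\<lambda>_. c) integrable_on {a..b}" by (rule integrable_continuous_interval) (rule continuous_on_const)
  have "integral {a..b} g \<le> integral {a..b} (\<lambda>_. c)"
    by (rule integral_le[OF assms(2) ic]) (rule assms(3))
  moreover have "integral {a..b} (\<lambda>_. c) = c"
  proof -
    have ab: "a \<le> b" using assms(1) by simp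
    then show ?thesis using assms(1) by (simp add: content_real)
  qed
  ultimately show ?thesis by linarith
qed

lemma Theta_lower:
  fixes a b :: real and k :: "real \<Rightarrow> real \<Rightarrow> real" and v :: "real^'d \<Rightarrow> real \<Rightarrow> real"
  assumes I: "b - a = 1" and kc: "continuous_on {a..b} (k \<xi>)" and vc: "continuous_on {a..b} (v x)"
    and kb: "\<And>\<eta>. \<eta> \<in> {a..b} \<Longrightarrow> 0 \<le> k \<xi> \<eta> \<and> k \<xi> \<eta> \<le> k1"
    and Om: "0 \<le> Om" and d: "\<And>\<eta>. \<eta> \<in> {a..b} \<Longrightarrow> - Om \<le> v x \<xi> - v x \<eta>"
  shows "- (k1 * Om) \<le> Theta a b k v x \<xi>"
  unfolding Theta_def
proof (rule integral_ge_const[OF I Theta_integrable[of a b k \<xi> v x, OF kc vc]])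
  fix \<eta> assume e: "\<eta> \<in> {a..b}"
  have k0: "0 \<le> k \<xi> \<eta>" and k1: "k \<xi> \<eta> \<le> k1" using kb[OF e] by auto
  have "k \<xi> \<eta> * (- Om) \<le> k \<xi> \<eta> * (v x \<xi> - v x \<eta>)" using mult_left_mono[OF d[OF e] k0] .
  moreover have "k1 * (- Om) \<le> k \<xi> \<eta> * (- Om)" using mult_right_mono_neg[OF k1, of "-Om"] Om by simp
  ultimately show "- (k1 * Om) \<le> k \<xi> \<eta> * (v x \<xi> - v x \<eta>)" by simp
qed

lemma loc_max_shift: "loc_max (\<lambda>y. f y - c - g y) x \<Longrightarrow> loc_max (\<lambda>y. f y - g y) x"
  unfolding loc_max_def by auto

lemma bound_one_alpha:
  fixes a b :: real
    and H :: "real^'d \<Rightarrow> real^'d \<Rightarrow> real \<Rightarrow> real"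
    and k :: "real \<Rightarrow> real \<Rightarrow> real"
    and u :: "real^'d \<Rightarrow> real \<Rightarrow> real"
    and x0 :: "real^'d"
  assumes I_len: "b - a = 1"
    and C1: "C1 > 0" and m: "m > 1"
    and B1: "\<And>x p \<xi>. \<xi> \<in> {a..b} \<Longrightarrow> C1 * norm p powr m - C2 \<le> H x p \<xi>"
    and k_cont: "continuous_on ({a..b} \<times> {a..b}) (\<lambda>(\<xi>, \<eta>). k \<xi> \<eta>)"
    and kb: "\<And>\<xi> \<eta>. \<xi> \<in> {a..b} \<Longrightarrow> \<eta> \<in> {a..b} \<Longrightarrow> 0 \<le> k \<xi> \<eta> \<and> k \<xi> \<eta> \<le> k1"
    and sol: "DP_solution a b H k \<alpha> u"
    and \<alpha>: "0 < \<alpha>" "\<alpha> \<le> 1"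
    and E: "\<And>\<xi>. \<xi> \<in> {a..b} \<Longrightarrow> \<bar>\<alpha> * u x0 \<xi> + Theta a b k u x0 \<xi>\<bar> \<le> E"
  obtains Om where "0 \<le> Om"
    "Om \<le> 2 * real CARD('d) + 2 * real CARD('d) * ((C2 + E) / C1 + ((1 + k1) / C1) * Om) powr (1/m)"
    "\<And>x \<xi>. \<xi> \<in> {a..b} \<Longrightarrow> \<bar>u x \<xi> - u x0 \<xi>\<bar> \<le> Om"
proof -
  have per: "\<And>\<xi>. Zperiodic (\<lambda>x. u x \<xi>)"
    and cont: "continuous_on (UNIV \<times> {a..b}) (\<lambda>(x,\<xi>). u x \<xi>)"
    and sub: "\<And>\<phi> D\<phi> \<xi> xh. C1_torus \<phi> D\<phi> \<Longrightarrow> \<xi> \<in> {a..b} \<Longrightarrow>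
        loc_max (\<lambda>y. u y \<xi> - \<phi> y) xh \<Longrightarrow>
        \<alpha> * u xh \<xi> + H xh (D\<phi> xh) \<xi> + Theta a b k u xh \<xi> \<le> 0"
    using sol unfolding DP_solution_def by blast+
  have ab: "a \<le> b" using I_len by simp
  define w where "w = (\<lambda>x \<xi>. u x \<xi> - u x0 \<xi>)"
  have wcont: "continuous_on (UNIV \<times> {a..b}) (\<lambda>(x,\<xi>). w x \<xi>)"
  proof -
    have c2: "continuous_on (UNIV \<times> {a..b}) (\<lambda>(x,\<xi>). u x0 \<xi>)"
    proof -
      have "continuous_on (UNIV \<times> {a..b}) (\<lambda>p. (\<lambda>(x,\<xi>). u x \<xi>) (x0, snd p))"
        by (rule continuous_on_compose2[OF cont]) (auto intro!: continuous_intros)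
      then show ?thesis by (simp add: case_prod_beta)
    qed
    show ?thesis unfolding w_def using continuous_on_diff[OF cont c2]
      by (simp add: case_prod_beta)
  qed
  have wper: "Zperiodic (\<lambda>x. w x \<xi>)" for \<xi>
    using per[of \<xi>] unfolding Zperiodic_def w_def by simp
  define W where "W = (\<lambda>(x,\<xi>). w x \<xi>) ` (UNIV \<times> {a..b})"
  have W_sub: "W \<subseteq> (\<lambda>(x,\<xi>). w x \<xi>) ` (cbox 0 1 \<times> {a..b})"
  proof
    fix t assume "t \<in> W"
    then obtain x \<xi> where t: "t = w x \<xi>" "\<xi> \<in> {a..b}" unfolding W_def by auto
    obtain x' where "x' \<in> cbox 0 1" "w x \<xi> = w x' \<xi>" using per_reduce[OF wper[of \<xi>], of x] by auto
    then show "t \<in> (\<lambda>(x,\<xi>). w x \<xi>) ` (cbox 0 1 \<times> {a..b})" using t by force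
  qed
  have "compact ((\<lambda>(x,\<xi>). w x \<xi>) ` (cbox (0::real^'d) 1 \<times> {a..b}))"
    by (rule compact_continuous_image[OF continuous_on_subset[OF wcont]]) (auto intro: compact_Times)
  then have Wb: "bounded W" using W_sub bounded_subset compact_imp_bounded by blast
  have w_in: "w x \<xi> \<in> W" if "\<xi> \<in> {a..b}" for x \<xi> unfolding W_def using that by force
  have Wne: "W \<noteq> {}" using w_in[of a x0] ab by auto
  define M where "M = Sup W"
  define N where "N = Inf W"
  have wM: "w x \<xi> \<le> M" if "\<xi> \<in> {a..b}" for x \<xi>
    unfolding M_def using cSup_upper[OF w_in[OF that] bounded_imp_bdd_above[OF Wb]] .
  have wN: "N \<le> w x \<xi>" if "\<xi> \<in> {a..b}" for x \<xi>
    unfolding N_def using cInf_lower[OF w_in[OF that] bounded_imp_bdd_below[OF Wb]] .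
  have w0: "w x0 \<xi> = 0" for \<xi> unfolding w_def by simp
  define Om where "Om = M - N"
  have M0: "0 \<le> M" using wM[of a x0] ab w0 by simp
  have N0: "N \<le> 0" using wN[of a x0] ab w0 by simp
  have Om0: "0 \<le> Om" using M0 N0 Om_def by simp
  have wabs: "\<bar>w x \<xi>\<bar> \<le> Om" if "\<xi> \<in> {a..b}" for x \<xi>
    using wM[OF that, of x] wN[OF that, of x] M0 N0 Om_def by simp
  define X where "X = (C2 + E + (1 + k1) * Om) / C1"
  define L where "L = X powr (1/m)"
  have L0: "0 \<le> L" unfolding L_def by simp
  have grad: "norm (D\<phi> xh) \<le> L"
    if \<xi>: "\<xi> \<in> {a..b}" and \<phi>: "C1_torus \<phi> D\<phi>" and lm: "loc_max (\<lambda>y. w y \<xi> - \<phi> y) xh"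
    for \<xi> \<phi> D\<phi> xh
  proof -
    have lm': "loc_max (\<lambda>y. u y \<xi> - \<phi> y) xh"
      using lm unfolding w_def by (rule loc_max_shift)
    have ineq: "\<alpha> * u xh \<xi> + H xh (D\<phi> xh) \<xi> + Theta a b k u xh \<xi> \<le> 0" by (rule sub[OF \<phi> \<xi> lm'])
    have kc: "continuous_on {a..b} (k \<xi>)" by (rule cont_k_slice[OF k_cont \<xi>])
    have split: "Theta a b k u xh \<xi> = Theta a b k w xh \<xi> + Theta a b k u x0 \<xi>"
      unfolding w_def by (rule Theta_split[of a b k \<xi> u xh x0, OF kc cont_slice_eta[OF cont] cont_slice_eta[OF cont]])
    have wc: "continuous_on {a..b} (w xh)" by (rule cont_slice_eta[OF wcont])
    have low: "- (k1 * Om) \<le> Theta a b k w xh \<xi>"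
    proof (rule Theta_lower[of b a k \<xi> w xh k1 Om, OF I_len cont_k_slice[OF k_cont \<xi>] wc _ Om0])
      fix \<eta> assume "\<eta> \<in> {a..b}"
      then show "0 \<le> k \<xi> \<eta> \<and> k \<xi> \<eta> \<le> k1" using kb \<xi> by blast
    next
      fix \<eta> assume e: "\<eta> \<in> {a..b}"
      show "- Om \<le> w xh \<xi> - w xh \<eta>" using wM[OF e, of xh] wN[OF \<xi>, of xh] Om_def by simp
    qed
    have uw: "\<alpha> * u xh \<xi> = \<alpha> * w xh \<xi> + \<alpha> * u x0 \<xi>" unfolding w_def by (simp add: algebra_simps)
    have aw: "- (\<alpha> * w xh \<xi>) \<le> Om"
    proof -
      have "\<bar>\<alpha> * w xh \<xi>\<bar> = \<alpha> * \<bar>w xh \<xi>\<bar>" using \<alpha> by (simp add: abs_mult)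
      also have "\<dots> \<le> 1 * Om" using \<alpha> wabs[OF \<xi>, of xh] Om0 by (intro mult_mono) auto
      finally show ?thesis by simp
    qed
    have Eb: "- (\<alpha> * u x0 \<xi> + Theta a b k u x0 \<xi>) \<le> E" using E[OF \<xi>] by simp
    have Hb: "H xh (D\<phi> xh) \<xi> \<le> E + (1 + k1) * Om"
    proof -
      have "(1 + k1) * Om = Om + k1 * Om" by (simp add: distrib_right)
      then show ?thesis using ineq split uw low aw Eb by linarith
    qed
    have "C1 * norm (D\<phi> xh) powr m \<le> C2 + E + (1 + k1) * Om" using B1[where x=xh and p="D\<phi> xh", OF \<xi>] Hb by simp
    then have pm: "norm (D\<phi> xh) powr m \<le> X" unfolding X_def using C1 by (simp add: field_simps)
    have "norm (D\<phi> xh) = (norm (D\<phi> xh) powr m) powr (1/m)"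
      using m by (simp add: powr_powr)
    also have "\<dots> \<le> X powr (1/m)" using pm m by (intro powr_mono2) auto
    finally show ?thesis unfolding L_def .
  qed
  have osc: "w x \<xi> - w y \<xi> \<le> (L + 1) * real CARD('d)" if \<xi>: "\<xi> \<in> {a..b}" for x y \<xi>
    by (rule osc_bound[OF cont_slice_x[OF wcont \<xi>] wper L0]) (rule grad[OF \<xi>])
  have Mb: "M \<le> (L + 1) * real CARD('d)"
    unfolding M_def
  proof (rule cSup_least[OF Wne])
    fix t assume "t \<in> W"
    then obtain x \<xi> where t: "t = w x \<xi>" "\<xi> \<in> {a..b}" unfolding W_def by auto
    show "t \<le> (L + 1) * real CARD('d)" using osc[OF t(2), of x x0] w0 t by simp
  qed
  have Nb: "- ((L + 1) * real CARD('d)) \<le> N"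
    unfolding N_def
  proof (rule cInf_greatest[OF Wne])
    fix t assume "t \<in> W"
    then obtain x \<xi> where t: "t = w x \<xi>" "\<xi> \<in> {a..b}" unfolding W_def by auto
    show "- ((L + 1) * real CARD('d)) \<le> t" using osc[OF t(2), of x0 x] w0 t by simp
  qed
  have "Om \<le> 2 * real CARD('d) + 2 * real CARD('d) * L"
    using Mb Nb Om_def by (simp add: algebra_simps)
  moreover have "X = (C2 + E) / C1 + ((1 + k1) / C1) * Om" unfolding X_def by (simp add: add_divide_distrib field_simps)
  ultimately have "Om \<le> 2 * real CARD('d) + 2 * real CARD('d) * ((C2 + E) / C1 + ((1 + k1) / C1) * Om) powr (1/m)"
    unfolding L_def by simp
  moreover have "\<bar>u x \<xi> - u x0 \<xi>\<bar> \<le> Om" if "\<xi> \<in> {a..b}" for x \<xi>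
    using wabs[OF that] unfolding w_def by simp
  ultimately show ?thesis using that Om0 by blast
qed

locale stab =
  fixes a b :: real
    and H :: "real^'d \<Rightarrow> real^'d \<Rightarrow> real \<Rightarrow> real"
    and k :: "real \<Rightarrow> real \<Rightarrow> real"
    and v :: "real \<Rightarrow> real^'d \<Rightarrow> real \<Rightarrow> real"
    and c :: "real \<Rightarrow> real"
    and x0 :: "real^'d"
    and k1 \<alpha>0 B :: real
  assumes I_len: "b - a = 1"
    and H_cont: "continuous_on (UNIV \<times> UNIV \<times> {a..b}) (\<lambda>(x, p, \<xi>). H x p \<xi>)"
    and k_cont: "continuous_on ({a..b} \<times> {a..b}) (\<lambda>(\<xi>, \<eta>). k \<xi> \<eta>)"
    and kb: "\<And>\<xi> \<eta>. \<xi> \<in> {a..b} \<Longrightarrow> \<eta> \<in> {a..b} \<Longrightarrow> 0 \<le> k \<xi> \<eta> \<and> k \<xi> \<eta> \<le> k1"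
    and vcont: "\<And>\<alpha>. 0 < \<alpha> \<Longrightarrow> continuous_on (UNIV \<times> {a..b}) (\<lambda>(x, \<xi>). v \<alpha> x \<xi>)"
    and sub: "\<And>\<alpha> \<phi> D\<phi> \<xi> xh. 0 < \<alpha> \<Longrightarrow> C1_torus \<phi> D\<phi> \<Longrightarrow> \<xi> \<in> {a..b} \<Longrightarrow>
        loc_max (\<lambda>y. v \<alpha> y \<xi> - \<phi> y) xh \<Longrightarrow>
        \<alpha> * v \<alpha> xh \<xi> + H xh (D\<phi> xh) \<xi> + Theta a b k (v \<alpha>) xh \<xi> \<le> 0"
    and ergodic: "uniform_limit {a..b}
        (\<lambda>\<alpha> \<xi>. \<alpha> * v \<alpha> x0 \<xi> + Theta a b k (v \<alpha>) x0 \<xi>) (\<lambda>\<xi>. - c \<xi>) (at_right 0)"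
    and \<alpha>0: "0 < \<alpha>0"
    and bound: "\<And>\<alpha> x \<xi>. 0 < \<alpha> \<Longrightarrow> \<alpha> \<le> \<alpha>0 \<Longrightarrow> \<xi> \<in> {a..b} \<Longrightarrow> \<bar>v \<alpha> x \<xi> - v \<alpha> x0 \<xi>\<bar> \<le> B"
begin

definition vt where "vt \<alpha> y \<eta> = v \<alpha> y \<eta> - v \<alpha> x0 \<eta>"

definition Sr where "Sr x \<xi> r = (SUP (\<alpha>, y, \<eta>) \<in> relax_set a b x \<xi> r. ereal (vt \<alpha> y \<eta>))"

definition ub where "ub x \<xi> = real_of_ereal (upper_relax a b v x0 x \<xi>)"

lemma ab: "a \<le> b" using I_len by simp

lemma relax_mono: "r \<le> r' \<Longrightarrow> relax_set a b x \<xi> r \<subseteq> relax_set a b x \<xi> r'"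
  unfolding relax_set_def by auto

lemma Sr_mono: "r \<le> r' \<Longrightarrow> Sr x \<xi> r \<le> Sr x \<xi> r'"
  unfolding Sr_def by (rule SUP_subset_mono[OF relax_mono]) auto

lemma Sr_lower: assumes "0 < r" "\<xi> \<in> {a..b}" shows "ereal (- B) \<le> Sr x \<xi> r"
proof -
  define \<alpha> where "\<alpha> = min r \<alpha>0 / 2"
  have a0: "0 < \<alpha>" "\<alpha> \<le> \<alpha>0" "\<alpha> \<le> r" using assms \<alpha>0 unfolding \<alpha>_def by auto
  have mem: "(\<alpha>, x, \<xi>) \<in> relax_set a b x \<xi> r" unfolding relax_set_def using a0 assms by auto
  have "- B \<le> vt \<alpha> x \<xi>" using bound[OF a0(1,2) assms(2), of x] unfolding vt_def by simp
  also have "ereal (vt \<alpha> x \<xi>) \<le> Sr x \<xi> r" unfolding Sr_def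
    using SUP_upper[OF mem, of "\<lambda>(\<alpha>, y, \<eta>). ereal (vt \<alpha> y \<eta>)"] by simp
  finally show ?thesis by simp
qed

lemma Sr_upper: assumes "0 < r" "r \<le> \<alpha>0" shows "Sr x \<xi> r \<le> ereal B"
  unfolding Sr_def
proof (rule SUP_least, clarify)
  fix \<alpha> y \<eta> assume "(\<alpha>, y, \<eta>) \<in> relax_set a b x \<xi> r"
  then have h0: "0 < \<alpha>" "\<eta> \<in> {a..b}" "dist x y + \<bar>\<xi> - \<eta>\<bar> + \<alpha> \<le> r" unfolding relax_set_def
    by auto
  have "\<alpha> \<le> \<alpha>0" using h0(3) assms zero_le_dist[of x y] abs_ge_zero[of "\<xi> - \<eta>"] by linarith
  then have h: "0 < \<alpha>" "\<alpha> \<le> \<alpha>0" "\<eta> \<in> {a..b}" using h0 by auto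
  show "ereal (vt \<alpha> y \<eta>) \<le> ereal B" using bound[OF h, of y] unfolding vt_def by simp
qed

lemma upper_relax_eq:
  assumes "\<xi> \<in> {a..b}"
  shows "upper_relax a b v x0 x \<xi> = (INF r\<in>{0<..}. Sr x \<xi> r)"
proof -
  have eq: "upper_relax a b v x0 x \<xi> = Lim (at_right (0::real)) (Sr x \<xi>)"
    unfolding upper_relax_def Sr_def vt_def by simp
  have "(Sr x \<xi> \<longlongrightarrow> (INF r\<in>{0<..}. Sr x \<xi> r)) (at_right 0)"
  proof (rule order_tendstoI)
    fix y assume y: "y < (INF r\<in>{0<..}. Sr x \<xi> r)"
    show "\<forall>\<^sub>F r in at_right 0. y < Sr x \<xi> r"
      using eventually_at_right_less[of "0::real"]
    proof (rule eventually_mono)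
      fix r :: real assume "0 < r"
      then have "(INF r\<in>{0<..}. Sr x \<xi> r) \<le> Sr x \<xi> r" by (intro INF_lower) auto
      then show "y < Sr x \<xi> r" using y by simp
    qed
  next
    fix y assume y: "(INF r\<in>{0<..}. Sr x \<xi> r) < y"
    then obtain r0 where r0: "0 < r0" "Sr x \<xi> r0 < y" by (auto simp: INF_less_iff)
    have "\<forall>\<^sub>F r in at_right 0. r < r0" using r0(1) by (simp add: eventually_at_right_field) (blast intro: exI[of _ r0])
    then show "\<forall>\<^sub>F r in at_right 0. Sr x \<xi> r < y"
    proof (rule eventually_mono)
      fix r assume "r < r0"
      then show "Sr x \<xi> r < y" using Sr_mono[of r r0 x \<xi>] r0 by simp
    qed
  qed
  then show ?thesis unfolding eq by (rule tendsto_Lim[OF trivial_limit_at_right_real])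
qed

lemma ub_ereal:
  assumes "\<xi> \<in> {a..b}"
  shows "upper_relax a b v x0 x \<xi> = ereal (ub x \<xi>)" "\<bar>ub x \<xi>\<bar> \<le> B"
proof -
  let ?I = "(INF r\<in>{0<..}. Sr x \<xi> r)"
  have lo: "ereal (- B) \<le> ?I" by (rule INF_greatest) (use Sr_lower assms in auto)
  have hi: "?I \<le> ereal B"
  proof -
    have "?I \<le> Sr x \<xi> \<alpha>0" by (rule INF_lower) (use \<alpha>0 in auto)
    also have "\<dots> \<le> ereal B" by (rule Sr_upper[OF \<alpha>0 order_refl])
    finally show ?thesis .
  qed
  obtain r where r: "?I = ereal r" using lo hi by (cases ?I) auto
  have "\<bar>r\<bar> \<le> B" using lo hi r by auto
  then show "upper_relax a b v x0 x \<xi> = ereal (ub x \<xi>)" "\<bar>ub x \<xi>\<bar> \<le> B"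
    using upper_relax_eq[OF assms, of x] r unfolding ub_def by auto
qed

lemma ub_U1:
  assumes "\<xi> \<in> {a..b}" "0 < \<epsilon>"
  obtains r where "0 < r" "\<And>\<alpha> y \<eta>. (\<alpha>, y, \<eta>) \<in> relax_set a b x \<xi> r \<Longrightarrow> vt \<alpha> y \<eta> \<le> ub x \<xi> + \<epsilon>"
proof -
  have e: "(INF r\<in>{0<..}. Sr x \<xi> r) = ereal (ub x \<xi>)"
    using upper_relax_eq[OF assms(1), of x] ub_ereal(1)[OF assms(1), of x] by simp
  have "ereal (ub x \<xi>) < ereal (ub x \<xi> + \<epsilon>)" using assms(2) by simp
  then have "(INF r\<in>{0<..}. Sr x \<xi> r) < ereal (ub x \<xi> + \<epsilon>)" using e by simp
  then obtain r where r: "0 < r" "Sr x \<xi> r < ereal (ub x \<xi> + \<epsilon>)" by (auto simp: INF_less_iff)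
  have "vt \<alpha> y \<eta> \<le> ub x \<xi> + \<epsilon>" if m: "(\<alpha>, y, \<eta>) \<in> relax_set a b x \<xi> r" for \<alpha> y \<eta>
  proof -
    have "ereal (vt \<alpha> y \<eta>) \<le> Sr x \<xi> r" unfolding Sr_def
      using SUP_upper[OF m, of "\<lambda>(\<alpha>, y, \<eta>). ereal (vt \<alpha> y \<eta>)"] by simp
    then have "ereal (vt \<alpha> y \<eta>) < ereal (ub x \<xi> + \<epsilon>)" using r(2) by (meson le_less_trans)
    then show ?thesis by simp
  qed
  then show ?thesis using that r(1) by blast
qed

lemma ub_U2:
  assumes "\<xi> \<in> {a..b}" "0 < \<epsilon>" "0 < r"
  obtains \<alpha> y \<eta> where "(\<alpha>, y, \<eta>) \<in> relax_set a b x \<xi> r" "ub x \<xi> - \<epsilon> < vt \<alpha> y \<eta>"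
proof -
  have "ereal (ub x \<xi>) \<le> Sr x \<xi> r"
    using upper_relax_eq[OF assms(1), of x] ub_ereal(1)[OF assms(1), of x] assms(3)
    by (metis INF_lower greaterThan_iff)
  moreover have "ereal (ub x \<xi> - \<epsilon>) < ereal (ub x \<xi>)" using assms(2) by simp
  ultimately have "ereal (ub x \<xi> - \<epsilon>) < Sr x \<xi> r" by (meson less_le_trans)
  then obtain t where t: "t \<in> relax_set a b x \<xi> r" "ereal (ub x \<xi> - \<epsilon>) < (\<lambda>(\<alpha>, y, \<eta>). ereal (vt \<alpha> y \<eta>)) t"
    unfolding Sr_def by (auto simp: less_SUP_iff)
  obtain \<alpha> y \<eta> where "t = (\<alpha>, y, \<eta>)" by (cases t) auto
  then show ?thesis using that t by auto
qed

end

lemma open_sets_lebesgue: "open U \<Longrightarrow> U \<in> sets lebesgue"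
  by (metis borel_open sets_completionI_sets sets_lborel)

lemma closed_sets_lebesgue: "closed U \<Longrightarrow> U \<in> sets lebesgue"
  by (metis borel_closed sets_completionI_sets sets_lborel)

lemma bounded_measurable_integrable:
  fixes f :: "real \<Rightarrow> real"
  assumes "f \<in> borel_measurable (lebesgue_on {a..b})" "\<And>x. x \<in> {a..b} \<Longrightarrow> \<bar>f x\<bar> \<le> C"
  shows "f integrable_on {a..b}"
proof (rule measurable_bounded_by_integrable_imp_integrable_real[OF assms(1) _ assms(2)])
  show "(\<lambda>_. C) integrable_on {a..b}" by (rule integrable_continuous_interval) (rule continuous_on_const)
  show "{a..b} \<in> sets lebesgue" by (rule closed_sets_lebesgue) simp
qed

context stab begin

lemma ub_usc:
  assumes "\<xi> \<in> {a..b}" "0 < \<epsilon>"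
  obtains \<delta> where "0 < \<delta>" "\<And>y \<eta>. \<eta> \<in> {a..b} \<Longrightarrow> dist x y + \<bar>\<xi> - \<eta>\<bar> < \<delta> \<Longrightarrow> ub y \<eta> \<le> ub x \<xi> + \<epsilon>"
proof -
  obtain r where r: "0 < r" "\<And>\<alpha> y \<eta>. (\<alpha>, y, \<eta>) \<in> relax_set a b x \<xi> r \<Longrightarrow> vt \<alpha> y \<eta> \<le> ub x \<xi> + \<epsilon>"
    using ub_U1[OF assms] by blast
  have "ub y \<eta> \<le> ub x \<xi> + \<epsilon>" if \<eta>: "\<eta> \<in> {a..b}" and d: "dist x y + \<bar>\<xi> - \<eta>\<bar> < r/2" for y \<eta>
  proof (rule ccontr)
    assume "\<not> ?thesis"
    then have e': "0 < ub y \<eta> - ub x \<xi> - \<epsilon>" by simp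
    obtain \<alpha> y' \<eta>' where m: "(\<alpha>, y', \<eta>') \<in> relax_set a b y \<eta> (r/2)"
      and gt: "ub y \<eta> - (ub y \<eta> - ub x \<xi> - \<epsilon>) < vt \<alpha> y' \<eta>'"
      using ub_U2[OF \<eta> e', of "r/2" y] r(1) by auto
    have m': "(\<alpha>, y', \<eta>') \<in> relax_set a b x \<xi> r"
    proof -
      have "0 < \<alpha>" "\<eta>' \<in> {a..b}" "dist y y' + \<bar>\<eta> - \<eta>'\<bar> + \<alpha> \<le> r/2" using m unfolding relax_set_def by auto
      moreover have "dist x y' \<le> dist x y + dist y y'" by (rule dist_triangle)
      moreover have "\<bar>\<xi> - \<eta>'\<bar> \<le> \<bar>\<xi> - \<eta>\<bar> + \<bar>\<eta> - \<eta>'\<bar>" by simp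
      ultimately show ?thesis using d unfolding relax_set_def by auto
    qed
    show False using r(2)[OF m'] gt by simp
  qed
  then show ?thesis using that[of "r/2"] r(1) by simp
qed

lemma ub_measurable:
  assumes "\<xi> \<in> {a..b}"
  shows "(\<lambda>\<eta>. ub x \<eta>) \<in> borel_measurable (lebesgue_on {a..b})"
proof -
  have "{w \<in> space (lebesgue_on {a..b}). ub x w < t} \<in> sets (lebesgue_on {a..b})" for t
  proof -
    define A where "A = {\<eta> \<in> {a..b}. ub x \<eta> < t}"
    have "\<forall>\<eta>\<in>A. \<exists>d>0. \<forall>\<eta>'\<in>{a..b}. \<bar>\<eta> - \<eta>'\<bar> < d \<longrightarrow> ub x \<eta>' < t"
    proof
      fix \<eta> assume "\<eta> \<in> A"
      then have \<eta>: "\<eta> \<in> {a..b}" "ub x \<eta> < t" unfolding A_def by auto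
      then have e: "0 < (t - ub x \<eta>) / 2" by simp
      obtain d where d: "0 < d" "\<And>y \<eta>'. \<eta>' \<in> {a..b} \<Longrightarrow> dist x y + \<bar>\<eta> - \<eta>'\<bar> < d \<Longrightarrow> ub y \<eta>' \<le> ub x \<eta> + (t - ub x \<eta>) / 2"
        using ub_usc[OF \<eta>(1) e, of x] by blast
      show "\<exists>d>0. \<forall>\<eta>'\<in>{a..b}. \<bar>\<eta> - \<eta>'\<bar> < d \<longrightarrow> ub x \<eta>' < t"
      proof (intro exI[of _ d] conjI ballI impI)
        fix \<eta>' assume "\<eta>' \<in> {a..b}" "\<bar>\<eta> - \<eta>'\<bar> < d"
        then have "ub x \<eta>' \<le> ub x \<eta> + (t - ub x \<eta>) / 2" using d(2)[of \<eta>' x] by simp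
        then show "ub x \<eta>' < t" using \<eta>(2) by (simp add: field_simps)
      qed (rule d(1))
    qed
    then obtain d where d: "\<And>\<eta>. \<eta> \<in> A \<Longrightarrow> 0 < d \<eta>"
      "\<And>\<eta> \<eta>'. \<eta> \<in> A \<Longrightarrow> \<eta>' \<in> {a..b} \<Longrightarrow> \<bar>\<eta> - \<eta>'\<bar> < d \<eta> \<Longrightarrow> ub x \<eta>' < t"
      by metis
    define U where "U = (\<Union>\<eta>\<in>A. ball \<eta> (d \<eta>))"
    have oU: "open U" unfolding U_def by auto
    have AU: "A = {a..b} \<inter> U"
    proof
      show "A \<subseteq> {a..b} \<inter> U" unfolding U_def using d(1) by (auto simp: A_def)
      show "{a..b} \<inter> U \<subseteq> A"
      proof
        fix \<eta>' assume "\<eta>' \<in> {a..b} \<inter> U"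
        then obtain \<eta> where "\<eta> \<in> A" "\<eta>' \<in> {a..b}" "dist \<eta> \<eta>' < d \<eta>" unfolding U_def by auto
        then show "\<eta>' \<in> A" using d(2)[of \<eta> \<eta>'] unfolding A_def by (auto simp: dist_real_def)
      qed
    qed
    have "A \<in> sets lebesgue" unfolding AU
      by (intro sets.Int closed_sets_lebesgue open_sets_lebesgue oU) simp
    moreover have "{w \<in> space (lebesgue_on {a..b}). ub x w < t} = A" unfolding A_def by simp
    moreover have "{a..b} \<inter> space lebesgue \<in> sets lebesgue" by (simp add: closed_sets_lebesgue)
    ultimately show ?thesis by (subst sets_restrict_space_iff) (auto simp: A_def)
  qed
  then show ?thesis by (simp add: borel_measurable_iff_less)
qed

end

context stab begin

lemma unif_bound_K:
  assumes K: "compact K" and \<xi>: "\<xi> \<in> {a..b}" and \<Phi>c: "continuous_on UNIV \<Phi>"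
    and lt: "\<And>z. z \<in> K \<Longrightarrow> ub z \<xi> - \<Phi> z < T"
  obtains \<rho> \<gamma> where "0 < \<rho>" "0 < \<gamma>"
    "\<And>\<alpha> y \<eta>. 0 < \<alpha> \<Longrightarrow> \<alpha> \<le> \<rho> \<Longrightarrow> \<eta> \<in> {a..b} \<Longrightarrow> \<bar>\<xi> - \<eta>\<bar> \<le> \<rho> \<Longrightarrow> y \<in> K \<Longrightarrow>
       vt \<alpha> y \<eta> - \<Phi> y \<le> T - \<gamma>"
proof (cases "K = {}")
  case True
  then show ?thesis using that[of 1 1] by auto
next
  case False
  have "\<forall>z\<in>K. \<exists>e r s. 0 < e \<and> 0 < r \<and> 0 < s \<and> e = (T - (ub z \<xi> - \<Phi> z)) / 3 \<and>
     (\<forall>\<alpha> y \<eta>. (\<alpha>, y, \<eta>) \<in> relax_set a b z \<xi> r \<longrightarrow> vt \<alpha> y \<eta> \<le> ub z \<xi> + e) \<and>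
     s \<le> r / 3 \<and> (\<forall>y. dist y z < s \<longrightarrow> \<bar>\<Phi> y - \<Phi> z\<bar> < e)"
  proof
    fix z assume z: "z \<in> K"
    define e where "e = (T - (ub z \<xi> - \<Phi> z)) / 3"
    have e0: "0 < e" unfolding e_def using lt[OF z] by simp
    obtain r where r: "0 < r" "\<And>\<alpha> y \<eta>. (\<alpha>, y, \<eta>) \<in> relax_set a b z \<xi> r \<Longrightarrow> vt \<alpha> y \<eta> \<le> ub z \<xi> + e"
      using ub_U1[OF \<xi> e0, of z] by blast
    have "isCont \<Phi> z" using \<Phi>c by (simp add: continuous_on_eq_continuous_at)
    then obtain d where d: "0 < d" "\<And>y. dist y z < d \<Longrightarrow> dist (\<Phi> y) (\<Phi> z) < e"
      using e0 unfolding continuous_at_eps_delta by blast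
    show "\<exists>e r s. 0 < e \<and> 0 < r \<and> 0 < s \<and> e = (T - (ub z \<xi> - \<Phi> z)) / 3 \<and>
     (\<forall>\<alpha> y \<eta>. (\<alpha>, y, \<eta>) \<in> relax_set a b z \<xi> r \<longrightarrow> vt \<alpha> y \<eta> \<le> ub z \<xi> + e) \<and>
     s \<le> r / 3 \<and> (\<forall>y. dist y z < s \<longrightarrow> \<bar>\<Phi> y - \<Phi> z\<bar> < e)"
      apply (rule exI[of _ e], rule exI[of _ r], rule exI[of _ "min (r/3) d"])
      using e0 r d unfolding e_def by (auto simp: dist_real_def)
  qed
  then obtain e r s where ers: "\<And>z. z \<in> K \<Longrightarrow> 0 < e z \<and> 0 < r z \<and> 0 < s z \<and> e z = (T - (ub z \<xi> - \<Phi> z)) / 3 \<and>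
     (\<forall>\<alpha> y \<eta>. (\<alpha>, y, \<eta>) \<in> relax_set a b z \<xi> (r z) \<longrightarrow> vt \<alpha> y \<eta> \<le> ub z \<xi> + e z) \<and>
     s z \<le> r z / 3 \<and> (\<forall>y. dist y z < s z \<longrightarrow> \<bar>\<Phi> y - \<Phi> z\<bar> < e z)"
    by metis
  have cov: "K \<subseteq> \<Union> ((\<lambda>z. ball z (s z)) ` K)" using ers by force
  obtain C where C: "C \<subseteq> K" "finite C" "K \<subseteq> \<Union> ((\<lambda>z. ball z (s z)) ` C)"
    using compactE_image[OF K _ cov] by blast
  have Cne: "C \<noteq> {}" using C(3) False by auto
  define \<rho> where "\<rho> = Min ((\<lambda>z. r z / 3) ` C)"
  define \<gamma> where "\<gamma> = Min (e ` C)"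
  have \<rho>0: "0 < \<rho>" unfolding \<rho>_def using C Cne ers by (subst Min_gr_iff) auto
  have \<gamma>0: "0 < \<gamma>" unfolding \<gamma>_def using C Cne ers by (subst Min_gr_iff) auto
  have main: "vt \<alpha> y \<eta> - \<Phi> y \<le> T - \<gamma>"
    if h: "0 < \<alpha>" "\<alpha> \<le> \<rho>" "\<eta> \<in> {a..b}" "\<bar>\<xi> - \<eta>\<bar> \<le> \<rho>" "y \<in> K" for \<alpha> y \<eta>
  proof -
    obtain z where z: "z \<in> C" "dist z y < s z" using C(3) h(5) by auto
    have zK: "z \<in> K" using z C by auto
    note E = ers[OF zK]
    have \<rho>z: "\<rho> \<le> r z / 3" unfolding \<rho>_def using z(1) C(2) by (intro Min_le) auto
    have \<gamma>z: "\<gamma> \<le> e z" unfolding \<gamma>_def using z(1) C(2) by simp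
    have "dist z y + \<bar>\<xi> - \<eta>\<bar> + \<alpha> \<le> r z" using z(2) E h \<rho>z by linarith
    then have "(\<alpha>, y, \<eta>) \<in> relax_set a b z \<xi> (r z)" using h unfolding relax_set_def by auto
    then have v1: "vt \<alpha> y \<eta> \<le> ub z \<xi> + e z" using E by blast
    have "\<bar>\<Phi> y - \<Phi> z\<bar> < e z" using E z(2) by (simp add: dist_commute)
    then have p1: "\<Phi> z - e z < \<Phi> y" by (simp add: abs_less_iff)
    have ez: "3 * e z = T - (ub z \<xi> - \<Phi> z)" using E by simp
    show ?thesis using v1 p1 ez \<gamma>z by linarith
  qed
  show ?thesis using that[OF \<rho>0 \<gamma>0 main] by blast
qed

end

context stab begin

lemma kc_slice: "s \<in> {a..b} \<Longrightarrow> continuous_on {a..b} (k s)"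
  by (rule cont_k_slice[OF k_cont])

lemma v_slice: "0 < \<alpha> \<Longrightarrow> continuous_on {a..b} (v \<alpha> x)"
  by (rule cont_slice_eta[OF vcont])

lemma Theta_cont_xi:
  assumes "0 < \<alpha>"
  shows "continuous_on {a..b} (\<lambda>\<xi>. Theta a b k (v \<alpha>) x \<xi>)"
proof -
  have vc: "continuous_on {a..b} (v \<alpha> x)" by (rule v_slice[OF assms])
  have c1: "continuous_on ({a..b} \<times> {a..b}) (\<lambda>p. v \<alpha> x (fst p))"
    by (rule continuous_on_compose2[OF vc]) (auto intro!: continuous_intros)
  have c2: "continuous_on ({a..b} \<times> {a..b}) (\<lambda>p. v \<alpha> x (snd p))"
    by (rule continuous_on_compose2[OF vc]) (auto intro!: continuous_intros)
  have c3: "continuous_on ({a..b} \<times> {a..b}) (\<lambda>p. k (fst p) (snd p))"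
    using k_cont by (simp add: case_prod_beta)
  have "continuous_on ({a..b} \<times> cbox a b) (\<lambda>(\<xi>, \<eta>). k \<xi> \<eta> * (v \<alpha> x \<xi> - v \<alpha> x \<eta>))"
    using continuous_on_mult[OF c3 continuous_on_diff[OF c1 c2]] by (simp add: case_prod_beta)
  from integral_continuous_on_param[OF this] show ?thesis unfolding Theta_def by simp
qed

lemma e_cont:
  assumes "0 < \<alpha>"
  shows "continuous_on {a..b} (\<lambda>\<xi>. \<alpha> * v \<alpha> x0 \<xi> + Theta a b k (v \<alpha>) x0 \<xi>)"
  by (intro continuous_on_add continuous_on_mult continuous_on_const v_slice[OF assms] Theta_cont_xi[OF assms])

lemma c_cont: "continuous_on {a..b} c"
proof -
  have "\<forall>\<^sub>F \<alpha> in at_right 0. continuous_on {a..b} (\<lambda>\<xi>. \<alpha> * v \<alpha> x0 \<xi> + Theta a b k (v \<alpha>) x0 \<xi>)"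
    using eventually_at_right_less[of "0::real"] by (rule eventually_mono) (rule e_cont)
  from uniform_limit_theorem[OF this ergodic trivial_limit_at_right_real]
  have "continuous_on {a..b} (\<lambda>\<xi>. - c \<xi>)" .
  then have "continuous_on {a..b} (\<lambda>\<xi>. - (- c \<xi>))" by (rule continuous_on_minus)
  then show ?thesis by simp
qed

lemma K_cont: "continuous_on {a..b} (\<lambda>s. integral {a..b} (k s))"
proof -
  have "continuous_on ({a..b} \<times> cbox a b) (\<lambda>(\<xi>, \<eta>). k \<xi> \<eta>)" using k_cont by simp
  from integral_continuous_on_param[OF this] show ?thesis by simp
qed

lemma k_unif:
  assumes "0 < \<epsilon>"
  obtains \<delta> where "0 < \<delta>" "\<And>s t \<eta>. s \<in> {a..b} \<Longrightarrow> t \<in> {a..b} \<Longrightarrow> \<eta> \<in> {a..b} \<Longrightarrow> \<bar>s - t\<bar> < \<delta> \<Longrightarrow> \<bar>k s \<eta> - k t \<eta>\<bar> < \<epsilon>"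
proof -
  have "uniformly_continuous_on ({a..b} \<times> {a..b}) (\<lambda>(\<xi>, \<eta>). k \<xi> \<eta>)"
    by (rule compact_uniformly_continuous[OF k_cont]) (auto intro: compact_Times)
  then obtain \<delta> where \<delta>: "0 < \<delta>" "\<And>p q. p \<in> {a..b} \<times> {a..b} \<Longrightarrow> q \<in> {a..b} \<times> {a..b} \<Longrightarrow> dist q p < \<delta> \<Longrightarrow>
      dist ((\<lambda>(\<xi>, \<eta>). k \<xi> \<eta>) q) ((\<lambda>(\<xi>, \<eta>). k \<xi> \<eta>) p) < \<epsilon>"
    using assms unfolding uniformly_continuous_on_def by metis
  show ?thesis
  proof (rule that[OF \<delta>(1)])
    fix s t \<eta> assume h: "s \<in> {a..b}" "t \<in> {a..b}" "\<eta> \<in> {a..b}" "\<bar>s - t\<bar> < \<delta>"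
    have "dist (s, \<eta>) (t, \<eta>) = \<bar>s - t\<bar>" by (simp add: dist_Pair_Pair dist_real_def)
    then show "\<bar>k s \<eta> - k t \<eta>\<bar> < \<epsilon>" using \<delta>(2)[of "(t, \<eta>)" "(s, \<eta>)"] h by (simp add: dist_real_def)
  qed
qed

lemma integral_abs_le_const:
  fixes g :: "real \<Rightarrow> real"
  assumes "g integrable_on {a..b}" "\<And>\<eta>. \<eta> \<in> {a..b} \<Longrightarrow> \<bar>g \<eta>\<bar> \<le> C"
  shows "\<bar>integral {a..b} g\<bar> \<le> C"
proof -
  have "integral {a..b} g \<le> C" by (rule integral_le_const[OF I_len assms(1)]) (use assms(2) in force)
  moreover have "- C \<le> integral {a..b} g" by (rule integral_ge_const[OF I_len assms(1)]) (use assms(2) in force)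
  ultimately show ?thesis by simp
qed

end

lemma C1_add:
  assumes A: "C1_torus \<phi> D\<phi>" and B: "C1_torus \<psi> D\<psi>"
  shows "C1_torus (\<lambda>x. \<phi> x + \<psi> x) (\<lambda>x. D\<phi> x + D\<psi> x)"
  unfolding C1_torus_def
proof (intro conjI allI)
  show "Zperiodic (\<lambda>x. \<phi> x + \<psi> x)" using A B unfolding C1_torus_def Zperiodic_def by simp
  show "continuous_on UNIV (\<lambda>x. D\<phi> x + D\<psi> x)" using A B unfolding C1_torus_def by (intro continuous_on_add) auto
  fix x
  have "(\<phi> has_derivative (\<lambda>h. D\<phi> x \<bullet> h)) (at x)" using A unfolding C1_torus_def by auto
  moreover have "(\<psi> has_derivative (\<lambda>h. D\<psi> x \<bullet> h)) (at x)" using B unfolding C1_torus_def by auto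
  ultimately have "((\<lambda>x. \<phi> x + \<psi> x) has_derivative (\<lambda>h. D\<phi> x \<bullet> h + D\<psi> x \<bullet> h)) (at x)"
    by (rule has_derivative_add)
  then show "((\<lambda>x. \<phi> x + \<psi> x) has_derivative (\<lambda>h. (D\<phi> x + D\<psi> x) \<bullet> h)) (at x)"
    by (simp add: inner_add_left)
qed

lemma C1_neg:
  assumes "C1_torus \<phi> D\<phi>"
  shows "C1_torus (\<lambda>x. - \<phi> x) (\<lambda>x. - D\<phi> x)"
  unfolding C1_torus_def
proof (intro conjI allI)
  show "Zperiodic (\<lambda>x. - \<phi> x)" using assms unfolding C1_torus_def Zperiodic_def by simp
  show "continuous_on UNIV (\<lambda>x. - D\<phi> x)" using assms unfolding C1_torus_def by (intro continuous_on_minus) auto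
  fix x
  have "(\<phi> has_derivative (\<lambda>h. D\<phi> x \<bullet> h)) (at x)" using assms unfolding C1_torus_def by auto
  then have "((\<lambda>x. - \<phi> x) has_derivative (\<lambda>h. - (D\<phi> x \<bullet> h))) (at x)" by (rule has_derivative_minus)
  then show "((\<lambda>x. - \<phi> x) has_derivative (\<lambda>h. - D\<phi> x \<bullet> h)) (at x)" by simp
qed

lemma C1_cont:
  assumes "C1_torus \<phi> D\<phi>"
  shows "continuous_on UNIV \<phi>"
proof -
  have "\<forall>x. isCont \<phi> x" using assms unfolding C1_torus_def
    using has_derivative_continuous by blast
  then show ?thesis by (simp add: continuous_at_imp_continuous_on)
qed

lemma C1_Dcont:
  assumes "C1_torus \<phi> D\<phi>"
  shows "continuous_on UNIV D\<phi>"
  using assms unfolding C1_torus_def by blast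

lemma psi_nonneg: "0 \<le> tf z 0 1 y"
  unfolding tf_def by (intro sum_nonneg) simp

lemma psi_pos:
  fixes z y :: "real^'d"
  assumes "y \<noteq> z" "dist y z \<le> 1/4"
  shows "0 < tf z 0 1 y"
proof (rule ccontr)
  assume "\<not> 0 < tf z 0 1 y"
  then have "tf z 0 1 y = 0" using psi_nonneg[of z y] by simp
  then have s0: "(\<Sum>i\<in>UNIV. (sin(pi*(y$i - z$i)))\<^sup>2) = 0" unfolding tf_def by simp
  have "\<forall>i\<in>UNIV. (sin(pi*(y$i - z$i)))\<^sup>2 = 0"
    using s0 by (subst (asm) sum_nonneg_eq_0_iff) auto
  have "y$i = z$i" for i
  proof -
    have "sin((y$i - z$i) * pi) = 0" using \<open>\<forall>i\<in>UNIV. _\<close> by (simp add: mult.commute)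
    then have "y$i - z$i \<in> \<int>" by (simp add: sin_times_pi_eq_0)
    moreover have "\<bar>y$i - z$i\<bar> < 1"
    proof -
      have "\<bar>(y - z)$i\<bar> \<le> norm (y - z)" by (rule component_le_norm_cart)
      then show ?thesis using assms(2) by (simp add: dist_norm)
    qed
    ultimately obtain n where n: "y$i - z$i = of_int n" "\<bar>of_int n :: real\<bar> < 1" by (metis Ints_cases)
    then have "\<bar>n\<bar> < 1" by linarith
    then have "n = 0" by simp
    then show ?thesis using n by simp
  qed
  then have "y = z" by (simp add: vec_eq_iff)
  then show False using assms(1) by simp
qed

lemma psi_center: "tf z 0 1 z = 0" "dtf z 0 1 z = 0"
  by (simp add: tf_at_center, simp add: dtf_at_center)

lemma eventually_of_tendsto_dist:
  "(f \<longlonglongrightarrow> l) \<Longrightarrow> 0 < e \<Longrightarrow> \<forall>\<^sub>F n in sequentially. dist (f n) l < e"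
  by (simp add: tendsto_iff)

context stab begin

definition rr :: "nat \<Rightarrow> real" where "rr n = \<alpha>0 / real (Suc n)"

lemma rr_pos: "0 < rr n" unfolding rr_def using \<alpha>0 by simp

lemma rr_le: "rr n \<le> \<alpha>0" unfolding rr_def using \<alpha>0 by (simp add: divide_le_eq)

lemma rr_lim: "rr \<longlonglongrightarrow> 0"
  unfolding rr_def using LIMSEQ_Suc[OF lim_const_over_n[of \<alpha>0]] by simp

lemma seq_setup:
  assumes \<xi>: "\<xi> \<in> {a..b}"
  obtains \<alpha>s ys \<eta>s where
    "\<And>n. 0 < \<alpha>s n" "\<And>n. \<alpha>s n \<le> rr n" "\<And>n. \<alpha>s n \<le> \<alpha>0" "\<And>n. \<eta>s n \<in> {a..b}"
    "\<And>n. dist xh (ys n) \<le> rr n" "\<And>n. \<bar>\<xi> - \<eta>s n\<bar> \<le> rr n"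
    "\<And>n. ub xh \<xi> - rr n < vt (\<alpha>s n) (ys n) (\<eta>s n)"
    "\<alpha>s \<longlonglongrightarrow> 0" "ys \<longlonglongrightarrow> xh" "\<eta>s \<longlonglongrightarrow> \<xi>" "filterlim \<alpha>s (at_right 0) sequentially"
proof -
  have "\<forall>n. \<exists>t. t \<in> relax_set a b xh \<xi> (rr n) \<and> ub xh \<xi> - rr n < (\<lambda>(\<alpha>, y, \<eta>). vt \<alpha> y \<eta>) t"
  proof
    fix n
    obtain \<alpha> y \<eta> where "(\<alpha>, y, \<eta>) \<in> relax_set a b xh \<xi> (rr n)" "ub xh \<xi> - rr n < vt \<alpha> y \<eta>"
      using ub_U2[OF \<xi> rr_pos rr_pos] by blast
    then show "\<exists>t. t \<in> relax_set a b xh \<xi> (rr n) \<and> ub xh \<xi> - rr n < (\<lambda>(\<alpha>, y, \<eta>). vt \<alpha> y \<eta>) t"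
      by (intro exI[of _ "(\<alpha>, y, \<eta>)"]) simp
  qed
  then obtain t where t: "\<And>n. t n \<in> relax_set a b xh \<xi> (rr n)" "\<And>n. ub xh \<xi> - rr n < (\<lambda>(\<alpha>, y, \<eta>). vt \<alpha> y \<eta>) (t n)"
    by metis
  define \<alpha>s where "\<alpha>s n = fst (t n)" for n
  define ys where "ys n = fst (snd (t n))" for n
  define \<eta>s where "\<eta>s n = snd (snd (t n))" for n
  have tn: "t n = (\<alpha>s n, ys n, \<eta>s n)" for n unfolding \<alpha>s_def ys_def \<eta>s_def by simp
  have R: "0 < \<alpha>s n" "\<eta>s n \<in> {a..b}" "dist xh (ys n) + \<bar>\<xi> - \<eta>s n\<bar> + \<alpha>s n \<le> rr n" for n
    using t(1)[of n] unfolding tn relax_set_def by auto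
  have p1: "\<alpha>s n \<le> rr n" for n using R[of n] zero_le_dist[of xh "ys n"] abs_ge_zero[of "\<xi> - \<eta>s n"] by linarith
  have p2: "dist xh (ys n) \<le> rr n" for n using R[of n] abs_ge_zero[of "\<xi> - \<eta>s n"] by linarith
  have p3: "\<bar>\<xi> - \<eta>s n\<bar> \<le> rr n" for n using R[of n] zero_le_dist[of xh "ys n"] by linarith
  have p4: "\<alpha>s n \<le> \<alpha>0" for n using p1[of n] rr_le[of n] by linarith
  have p5: "ub xh \<xi> - rr n < vt (\<alpha>s n) (ys n) (\<eta>s n)" for n using t(2)[of n] unfolding tn by simp
  have l1: "\<alpha>s \<longlonglongrightarrow> 0"
  proof (rule Lim_null_comparison[OF _ rr_lim])
    show "\<forall>\<^sub>F n in sequentially. norm (\<alpha>s n) \<le> rr n"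
      using R(1) p1 by (intro always_eventually allI) (metis abs_of_pos real_norm_def)
  qed
  have l2: "ys \<longlonglongrightarrow> xh"
  proof -
    have "(\<lambda>n. ys n - xh) \<longlonglongrightarrow> 0"
      by (rule Lim_null_comparison[OF _ rr_lim]) (use p2 in \<open>auto intro!: always_eventually simp: dist_norm norm_minus_commute\<close>)
    then show ?thesis by (simp add: LIM_zero_iff)
  qed
  have l3: "\<eta>s \<longlonglongrightarrow> \<xi>"
  proof -
    have "(\<lambda>n. \<eta>s n - \<xi>) \<longlonglongrightarrow> 0"
      by (rule Lim_null_comparison[OF _ rr_lim]) (use p3 in \<open>auto intro!: always_eventually simp: abs_minus_commute\<close>)
    then show ?thesis by (simp add: LIM_zero_iff)
  qed
  have l4: "filterlim \<alpha>s (at_right 0) sequentially"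
    by (rule tendsto_imp_filterlim_at_right[OF l1]) (use R in \<open>auto intro!: always_eventually\<close>)
  show ?thesis using that[OF R(1) p1 p4 R(2) p2 p3 p5 l1 l2 l3 l4] .
qed

end

locale stab_pt = stab a b H k v c x0 k1 \<alpha>0 B
  for a b :: real
    and H :: "real^'d \<Rightarrow> real^'d \<Rightarrow> real \<Rightarrow> real"
    and k :: "real \<Rightarrow> real \<Rightarrow> real"
    and v :: "real \<Rightarrow> real^'d \<Rightarrow> real \<Rightarrow> real"
    and c :: "real \<Rightarrow> real"
    and x0 :: "real^'d"
    and k1 \<alpha>0 B :: real +
  fixes \<phi> :: "real^'d \<Rightarrow> real" and D\<phi> :: "real^'d \<Rightarrow> real^'d" and \<xi> :: real and xh :: "real^'d"
    and e :: real
    and \<alpha>s :: "nat \<Rightarrow> real" and ys :: "nat \<Rightarrow> real^'d" and \<eta>s :: "nat \<Rightarrow> real"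
  assumes \<phi>1: "C1_torus \<phi> D\<phi>" and \<xi>: "\<xi> \<in> {a..b}"
    and e0: "0 < e" and lmx: "\<And>y. dist y xh < e \<Longrightarrow> ub y \<xi> - \<phi> y \<le> ub xh \<xi> - \<phi> xh"
    and S1: "\<And>n. 0 < \<alpha>s n" and S2: "\<And>n. \<alpha>s n \<le> rr n" and S3: "\<And>n. \<alpha>s n \<le> \<alpha>0"
    and S4: "\<And>n. \<eta>s n \<in> {a..b}" and S5: "\<And>n. dist xh (ys n) \<le> rr n"
    and S6: "\<And>n. \<bar>\<xi> - \<eta>s n\<bar> \<le> rr n"
    and S7: "\<And>n. ub xh \<xi> - rr n < vt (\<alpha>s n) (ys n) (\<eta>s n)"
    and S8: "\<alpha>s \<longlonglongrightarrow> 0" and S9: "ys \<longlonglongrightarrow> xh" and S10: "\<eta>s \<longlonglongrightarrow> \<xi>"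
    and S11: "filterlim \<alpha>s (at_right 0) sequentially"
begin

definition "\<delta> = min (e/2) (1/4)"
definition "\<Phi> = (\<lambda>y. \<phi> y + tf xh 0 1 y)"
definition "D\<Phi> = (\<lambda>y. D\<phi> y + dtf xh 0 1 y)"
definition "U = ub xh \<xi>"
definition "T0 = U - \<phi> xh"
definition "fn n y = vt (\<alpha>s n) y (\<eta>s n) - \<Phi> y"
definition "zs n = (SOME z. z \<in> cball xh \<delta> \<and> (\<forall>y\<in>cball xh \<delta>. fn n y \<le> fn n z))"

lemma \<delta>0: "0 < \<delta>" "\<delta> < e" "\<delta> \<le> 1/4"
  unfolding \<delta>_def using e0 by auto

lemma \<Phi>1: "C1_torus \<Phi> D\<Phi>" unfolding \<Phi>_def D\<Phi>_def by (rule C1_add[OF \<phi>1 C1_tf])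
lemma \<Phi>c: "continuous_on UNIV \<Phi>" by (rule C1_cont[OF \<Phi>1])
lemma D\<Phi>c: "continuous_on UNIV D\<Phi>" by (rule C1_Dcont[OF \<Phi>1])
lemma \<Phi>xh: "\<Phi> xh = \<phi> xh" unfolding \<Phi>_def by (simp add: psi_center)
lemma D\<Phi>xh: "D\<Phi> xh = D\<phi> xh" unfolding D\<Phi>_def by (simp add: psi_center)

lemma vtc: "continuous_on UNIV (\<lambda>y. vt (\<alpha>s n) y (\<eta>s n))"
proof -
  have "continuous_on UNIV (\<lambda>y. v (\<alpha>s n) y (\<eta>s n))" by (rule cont_slice_x[OF vcont[OF S1] S4])
  then show ?thesis unfolding vt_def by (intro continuous_on_diff continuous_on_const)
qed

lemma fnc: "continuous_on UNIV (fn n)"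
  unfolding fn_def[abs_def] by (intro continuous_on_diff vtc \<Phi>c)

lemma zs: "zs n \<in> cball xh \<delta>" "\<And>y. y \<in> cball xh \<delta> \<Longrightarrow> fn n y \<le> fn n (zs n)"
proof -
  have "\<exists>z\<in>cball xh \<delta>. \<forall>y\<in>cball xh \<delta>. fn n y \<le> fn n z"
    by (rule continuous_attains_sup) (use \<delta>0 in \<open>auto intro: continuous_on_subset[OF fnc]\<close>)
  then have "\<exists>z. z \<in> cball xh \<delta> \<and> (\<forall>y\<in>cball xh \<delta>. fn n y \<le> fn n z)" by blast
  from someI_ex[OF this] show "zs n \<in> cball xh \<delta>" "\<And>y. y \<in> cball xh \<delta> \<Longrightarrow> fn n y \<le> fn n (zs n)"
    unfolding zs_def by blast+
qed

lemma vt_bound: "\<eta> \<in> {a..b} \<Longrightarrow> \<bar>vt (\<alpha>s n) y \<eta>\<bar> \<le> B"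
  unfolding vt_def by (rule bound[OF S1 S3])

lemma \<Phi>_lim: "(f \<longlonglongrightarrow> xh) \<Longrightarrow> (\<lambda>n. \<Phi> (f n)) \<longlonglongrightarrow> \<phi> xh"
  using isCont_tendsto_compose[of xh \<Phi> f sequentially] \<Phi>c \<Phi>xh
  by (simp add: continuous_on_eq_continuous_at)

lemma rr_ev: "0 < r \<Longrightarrow> \<forall>\<^sub>F n in sequentially. rr n < r"
  using order_tendstoD(2)[OF rr_lim] by simp

lemma zlim: "zs \<longlonglongrightarrow> xh"
proof (rule tendstoI)
  fix \<epsilon> :: real assume \<epsilon>: "0 < \<epsilon>"
  define \<epsilon>' where "\<epsilon>' = min \<epsilon> \<delta>"
  have \<epsilon>'0: "0 < \<epsilon>'" using \<epsilon> \<delta>0 unfolding \<epsilon>'_def by simp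
  define K where "K = cball xh \<delta> - ball xh \<epsilon>'"
  have Kc: "compact K" unfolding K_def by (intro compact_diff) auto
  have Klt: "ub z \<xi> - \<Phi> z < T0" if z: "z \<in> K" for z
  proof -
    have d: "dist xh z \<le> \<delta>" "\<epsilon>' \<le> dist xh z" using z unfolding K_def by auto
    have "ub z \<xi> - \<phi> z \<le> T0" unfolding T0_def U_def using lmx[of z] d \<delta>0 by (simp add: dist_commute)
    moreover have "0 < tf xh 0 1 z"
      by (rule psi_pos) (use d \<epsilon>'0 \<delta>0 in \<open>auto simp: dist_commute\<close>)
    ultimately show ?thesis unfolding \<Phi>_def by simp
  qed
  obtain \<rho> \<gamma> where \<rho>\<gamma>: "0 < \<rho>" "0 < \<gamma>"
    "\<And>\<alpha> y \<eta>. 0 < \<alpha> \<Longrightarrow> \<alpha> \<le> \<rho> \<Longrightarrow> \<eta> \<in> {a..b} \<Longrightarrow> \<bar>\<xi> - \<eta>\<bar> \<le> \<rho> \<Longrightarrow> y \<in> K \<Longrightarrow>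
       vt \<alpha> y \<eta> - \<Phi> y \<le> T0 - \<gamma>"
    using unif_bound_K[OF Kc \<xi> \<Phi>c Klt] by blast
  have ev1: "\<forall>\<^sub>F n in sequentially. rr n < min \<rho> (min \<delta> (\<gamma>/2))" by (rule rr_ev) (use \<rho>\<gamma> \<delta>0 in simp)
  have ev2: "\<forall>\<^sub>F n in sequentially. dist (\<Phi> (ys n)) (\<phi> xh) < \<gamma>/2"
  proof -
    have "0 < \<gamma>/2" using \<rho>\<gamma> by simp
    then show ?thesis using \<Phi>_lim[OF S9] unfolding tendsto_iff by blast
  qed
  show "\<forall>\<^sub>F n in sequentially. dist (zs n) xh < \<epsilon>"
    using ev1 ev2
  proof eventually_elim
    case (elim n)
    have ysb: "ys n \<in> cball xh \<delta>" using S5[of n] elim by auto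
    have "fn n (ys n) > T0 - \<gamma>"
    proof -
      have "\<bar>\<Phi> (ys n) - \<phi> xh\<bar> < \<gamma>/2" using elim(2) by (simp only: dist_real_def)
      then have "\<Phi> (ys n) - \<phi> xh < \<gamma>/2" by (metis abs_less_iff)
      then have "\<Phi> (ys n) < \<phi> xh + \<gamma>/2" by linarith
      then show ?thesis using S7[of n] elim(1) unfolding fn_def T0_def U_def by simp
    qed
    then have big: "fn n (zs n) > T0 - \<gamma>" using zs(2)[OF ysb, of n] by simp
    have "zs n \<notin> K"
    proof
      assume "zs n \<in> K"
      then have "vt (\<alpha>s n) (zs n) (\<eta>s n) - \<Phi> (zs n) \<le> T0 - \<gamma>"
        using \<rho>\<gamma>(3)[OF S1 _ S4] S2[of n] S6[of n] elim(1) by simp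
      then show False using big unfolding fn_def by simp
    qed
    then have "dist xh (zs n) < \<epsilon>'" using zs(1)[of n] unfolding K_def by auto
    then show "dist (zs n) xh < \<epsilon>" unfolding \<epsilon>'_def by (simp add: dist_commute)
  qed
qed

end

context stab_pt begin

definition "V n = vt (\<alpha>s n) (zs n) (\<eta>s n)"

lemma zs_ev: "0 < r \<Longrightarrow> \<forall>\<^sub>F n in sequentially. dist (zs n) xh < r"
  using zlim by (simp add: tendsto_iff)

lemma Vlim: "V \<longlonglongrightarrow> U"
proof (rule tendstoI)
  fix \<epsilon> :: real assume \<epsilon>: "0 < \<epsilon>"
  have \<epsilon>2: "0 < \<epsilon>/2" using \<epsilon> by simp
  obtain r where r: "0 < r" "\<And>\<alpha> y \<eta>. (\<alpha>, y, \<eta>) \<in> relax_set a b xh \<xi> r \<Longrightarrow> vt \<alpha> y \<eta> \<le> ub xh \<xi> + \<epsilon>/2"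
    using ub_U1[OF \<xi> \<epsilon>2, of xh] by blast
  have \<epsilon>4: "0 < \<epsilon>/4" using \<epsilon> by simp
  have ev1: "\<forall>\<^sub>F n in sequentially. dist (zs n) xh < r/2" by (rule zs_ev) (use r in simp)
  have ev2: "\<forall>\<^sub>F n in sequentially. rr n < min (r/4) (min \<delta> (\<epsilon>/4))" by (rule rr_ev) (use r \<delta>0 \<epsilon> in simp)
  have ev3: "\<forall>\<^sub>F n in sequentially. dist (\<Phi> (ys n)) (\<phi> xh) < \<epsilon>/4"
    using \<Phi>_lim[OF S9] \<epsilon>4 unfolding tendsto_iff by blast
  have ev4: "\<forall>\<^sub>F n in sequentially. dist (\<Phi> (zs n)) (\<phi> xh) < \<epsilon>/4"
    using \<Phi>_lim[OF zlim] \<epsilon>4 unfolding tendsto_iff by blast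
  show "\<forall>\<^sub>F n in sequentially. dist (V n) U < \<epsilon>"
    using ev1 ev2 ev3 ev4
  proof eventually_elim
    case (elim n)
    have rn: "rr n < r/4" "rr n < \<delta>" "rr n < \<epsilon>/4" using elim(2) by auto
    have "dist xh (zs n) + \<bar>\<xi> - \<eta>s n\<bar> + \<alpha>s n \<le> r"
      using elim(1) S6[of n] S2[of n] rn by (simp add: dist_commute)
    then have "(\<alpha>s n, zs n, \<eta>s n) \<in> relax_set a b xh \<xi> r"
      unfolding relax_set_def using S1 S4 by auto
    then have up: "V n \<le> U + \<epsilon>/2" unfolding V_def U_def by (rule r(2))
    have ysb: "ys n \<in> cball xh \<delta>" using S5[of n] rn by auto
    have "fn n (ys n) \<le> fn n (zs n)" by (rule zs(2)[OF ysb])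
    then have "vt (\<alpha>s n) (ys n) (\<eta>s n) - \<Phi> (ys n) \<le> V n - \<Phi> (zs n)" unfolding fn_def V_def .
    moreover have "\<bar>\<Phi> (ys n) - \<phi> xh\<bar> < \<epsilon>/4" "\<bar>\<Phi> (zs n) - \<phi> xh\<bar> < \<epsilon>/4"
      using elim(3,4) by (simp_all only: dist_real_def)
    ultimately have A: "vt (\<alpha>s n) (ys n) (\<eta>s n) - \<Phi> (ys n) \<le> V n - \<Phi> (zs n)"
      and B1: "\<Phi> (ys n) - \<phi> xh < \<epsilon>/4" and B2: "- (\<epsilon>/4) < \<Phi> (zs n) - \<phi> xh"
      by (auto simp only: abs_less_iff)
    have lo: "U - \<epsilon> < V n" unfolding U_def using A B1 B2 S7[of n] rn(3) \<epsilon> by linarith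
    show "dist (V n) U < \<epsilon>" using up lo \<epsilon> by (simp add: dist_real_def abs_less_iff)
  qed
qed

lemma locmax_ev: "\<forall>\<^sub>F n in sequentially. loc_max (\<lambda>y. v (\<alpha>s n) y (\<eta>s n) - \<Phi> y) (zs n)"
proof -
  have "\<forall>\<^sub>F n in sequentially. dist (zs n) xh < \<delta>/2" by (rule zs_ev) (use \<delta>0 in simp)
  then show ?thesis
  proof (rule eventually_mono)
    fix n assume d: "dist (zs n) xh < \<delta>/2"
    show "loc_max (\<lambda>y. v (\<alpha>s n) y (\<eta>s n) - \<Phi> y) (zs n)"
      unfolding loc_max_def
    proof (intro exI[of _ "\<delta>/2"] conjI allI impI)
      show "0 < \<delta>/2" using \<delta>0 by simp
      fix y assume "dist y (zs n) < \<delta>/2"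
      then have "dist xh y \<le> \<delta>" using d dist_triangle[of y xh "zs n"] by (simp add: dist_commute)
      then have "fn n y \<le> fn n (zs n)" by (intro zs(2)) simp
      then show "v (\<alpha>s n) y (\<eta>s n) - \<Phi> y \<le> v (\<alpha>s n) (zs n) (\<eta>s n) - \<Phi> (zs n)"
        unfolding fn_def vt_def by simp
    qed
  qed
qed

definition "Kf s = integral {a..b} (k s)"
definition "An n = integral {a..b} (\<lambda>\<eta>. k (\<eta>s n) \<eta> * vt (\<alpha>s n) (zs n) \<eta>)"
definition "en n = \<alpha>s n * v (\<alpha>s n) x0 (\<eta>s n) + Theta a b k (v (\<alpha>s n)) x0 (\<eta>s n)"

lemma vt_slice: "continuous_on {a..b} (vt (\<alpha>s n) y)"
  unfolding vt_def[abs_def] by (intro continuous_on_diff v_slice S1)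

lemma decomp:
  "\<alpha>s n * v (\<alpha>s n) (zs n) (\<eta>s n) + Theta a b k (v (\<alpha>s n)) (zs n) (\<eta>s n)
     = \<alpha>s n * V n + V n * Kf (\<eta>s n) - An n + en n"
proof -
  have kc: "continuous_on {a..b} (k (\<eta>s n))" by (rule kc_slice[OF S4])
  have vteq: "(\<lambda>x \<xi>. v (\<alpha>s n) x \<xi> - v (\<alpha>s n) x0 \<xi>) = vt (\<alpha>s n)" by (simp add: vt_def fun_eq_iff)
  have sp: "Theta a b k (v (\<alpha>s n)) (zs n) (\<eta>s n) = Theta a b k (vt (\<alpha>s n)) (zs n) (\<eta>s n) + Theta a b k (v (\<alpha>s n)) x0 (\<eta>s n)"
    using Theta_split[of a b k "\<eta>s n" "v (\<alpha>s n)" "zs n" x0, OF kc v_slice[OF S1] v_slice[OF S1]] vteq by simp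
  have i1: "(\<lambda>\<eta>. k (\<eta>s n) \<eta> * V n) integrable_on {a..b}"
    by (intro integrable_continuous_interval continuous_on_mult kc continuous_on_const)
  have i2: "(\<lambda>\<eta>. k (\<eta>s n) \<eta> * vt (\<alpha>s n) (zs n) \<eta>) integrable_on {a..b}"
    by (intro integrable_continuous_interval continuous_on_mult kc vt_slice)
  have "Theta a b k (vt (\<alpha>s n)) (zs n) (\<eta>s n) = integral {a..b} (\<lambda>\<eta>. k (\<eta>s n) \<eta> * V n - k (\<eta>s n) \<eta> * vt (\<alpha>s n) (zs n) \<eta>)"
    unfolding Theta_def V_def by (simp add: right_diff_distrib)
  also have "\<dots> = integral {a..b} (\<lambda>\<eta>. k (\<eta>s n) \<eta> * V n) - An n"
    unfolding An_def by (rule integral_diff[OF i1 i2])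
  also have "integral {a..b} (\<lambda>\<eta>. k (\<eta>s n) \<eta> * V n) = Kf (\<eta>s n) * V n"
    unfolding Kf_def by (rule integral_mult_left)
  finally have "Theta a b k (vt (\<alpha>s n)) (zs n) (\<eta>s n) = Kf (\<eta>s n) * V n - An n" .
  moreover have "\<alpha>s n * v (\<alpha>s n) (zs n) (\<eta>s n) = \<alpha>s n * V n + \<alpha>s n * v (\<alpha>s n) x0 (\<eta>s n)"
    unfolding V_def vt_def by (simp add: algebra_simps)
  ultimately show ?thesis using sp unfolding en_def by (simp add: algebra_simps)
qed

end

context stab_pt begin

lemma B0: "0 \<le> B"
  using bound[OF S1[of 0] S3[of 0] S4[of 0], of 0] by (meson abs_ge_zero order_trans)

definition "Gf \<eta> = k \<xi> \<eta> * ub xh \<eta>"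
definition "hn n \<eta> = max (k \<xi> \<eta> * vt (\<alpha>s n) (zs n) \<eta>) (Gf \<eta>)"
definition "Fn n = integral {a..b} (\<lambda>\<eta>. k \<xi> \<eta> * vt (\<alpha>s n) (zs n) \<eta>)"
definition "Rn n = integral {a..b} (\<lambda>\<eta>. (k (\<eta>s n) \<eta> - k \<xi> \<eta>) * vt (\<alpha>s n) (zs n) \<eta>)"

lemma ab_leb: "{a..b} \<in> sets lebesgue" by (rule closed_sets_lebesgue) simp

lemma int_f: "(\<lambda>\<eta>. k \<xi> \<eta> * vt (\<alpha>s n) (zs n) \<eta>) integrable_on {a..b}"
  by (intro integrable_continuous_interval continuous_on_mult kc_slice[OF \<xi>] vt_slice)

lemma int_r: "(\<lambda>\<eta>. (k (\<eta>s n) \<eta> - k \<xi> \<eta>) * vt (\<alpha>s n) (zs n) \<eta>) integrable_on {a..b}"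
  by (intro integrable_continuous_interval continuous_on_mult continuous_on_diff kc_slice[OF \<xi>] kc_slice[OF S4] vt_slice)

lemma An_split: "An n = Fn n + Rn n"
proof -
  have "An n = integral {a..b} (\<lambda>\<eta>. k \<xi> \<eta> * vt (\<alpha>s n) (zs n) \<eta> + (k (\<eta>s n) \<eta> - k \<xi> \<eta>) * vt (\<alpha>s n) (zs n) \<eta>)"
    unfolding An_def by (simp add: algebra_simps)
  also have "\<dots> = Fn n + Rn n" unfolding Fn_def Rn_def by (rule integral_add[OF int_f int_r])
  finally show ?thesis .
qed

lemma Gf_meas: "Gf \<in> borel_measurable (lebesgue_on {a..b})"
proof -
  have "k \<xi> \<in> borel_measurable (lebesgue_on {a..b})"
    by (rule continuous_imp_measurable_on_sets_lebesgue[OF kc_slice[OF \<xi>] ab_leb])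
  moreover have "(\<lambda>\<eta>. ub xh \<eta>) \<in> borel_measurable (lebesgue_on {a..b})" by (rule ub_measurable[OF \<xi>])
  ultimately show ?thesis unfolding Gf_def[abs_def] by (rule borel_measurable_times)
qed

lemma kabs: "\<eta> \<in> {a..b} \<Longrightarrow> s \<in> {a..b} \<Longrightarrow> \<bar>k s \<eta>\<bar> \<le> k1"
  using kb[of s \<eta>] by auto

lemma Gf_bound: "\<eta> \<in> {a..b} \<Longrightarrow> \<bar>Gf \<eta>\<bar> \<le> k1 * B"
  unfolding Gf_def abs_mult using kabs[OF _ \<xi>] ub_ereal(2)[of \<eta> xh] B0 kb[OF \<xi> \<xi>]
  by (intro mult_mono) auto

lemma Gf_int: "Gf integrable_on {a..b}"
  by (rule bounded_measurable_integrable[OF Gf_meas Gf_bound])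

lemma hn_bound: "\<eta> \<in> {a..b} \<Longrightarrow> \<bar>hn n \<eta>\<bar> \<le> k1 * B"
proof -
  assume e: "\<eta> \<in> {a..b}"
  have "\<bar>k \<xi> \<eta> * vt (\<alpha>s n) (zs n) \<eta>\<bar> \<le> k1 * B"
    unfolding abs_mult using kabs[OF e \<xi>] vt_bound[OF e] by (intro mult_mono) auto
  then show ?thesis using Gf_bound[OF e] unfolding hn_def by auto
qed

lemma hn_int: "hn n integrable_on {a..b}"
proof (rule bounded_measurable_integrable[OF _ hn_bound])
  have m1: "(\<lambda>\<eta>. k \<xi> \<eta> * vt (\<alpha>s n) (zs n) \<eta>) \<in> borel_measurable (lebesgue_on {a..b})"
    by (intro continuous_imp_measurable_on_sets_lebesgue ab_leb continuous_on_mult kc_slice[OF \<xi>] vt_slice)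
  have m2: "(\<lambda>\<eta>. Gf \<eta>) \<in> borel_measurable (lebesgue_on {a..b})" using Gf_meas by simp
  show "hn n \<in> borel_measurable (lebesgue_on {a..b})"
    unfolding hn_def[abs_def] by (rule borel_measurable_max[OF m2 m1])
qed

lemma hn_conv: "\<eta> \<in> {a..b} \<Longrightarrow> (\<lambda>n. hn n \<eta>) \<longlonglongrightarrow> Gf \<eta>"
proof (rule tendstoI)
  fix \<epsilon> :: real assume e: "\<eta> \<in> {a..b}" and \<epsilon>: "0 < \<epsilon>"
  define \<epsilon>' where "\<epsilon>' = \<epsilon> / (k1 + 1)"
  have k10: "0 \<le> k1" using kb[OF e e] by linarith
  have \<epsilon>'0: "0 < \<epsilon>'" unfolding \<epsilon>'_def using \<epsilon> k10 by simp
  obtain r where r: "0 < r" "\<And>\<alpha> y \<eta>'. (\<alpha>, y, \<eta>') \<in> relax_set a b xh \<eta> r \<Longrightarrow> vt \<alpha> y \<eta>' \<le> ub xh \<eta> + \<epsilon>'"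
    using ub_U1[OF e \<epsilon>'0, of xh] by blast
  have ev1: "\<forall>\<^sub>F n in sequentially. dist (zs n) xh < r/2" by (rule zs_ev) (use r in simp)
  have ev2: "\<forall>\<^sub>F n in sequentially. rr n < r/2" by (rule rr_ev) (use r in simp)
  show "\<forall>\<^sub>F n in sequentially. dist (hn n \<eta>) (Gf \<eta>) < \<epsilon>"
    using ev1 ev2
  proof eventually_elim
    case (elim n)
    have "dist xh (zs n) + \<bar>\<eta> - \<eta>\<bar> + \<alpha>s n \<le> r" using elim S2[of n] by (simp add: dist_commute)
    then have "(\<alpha>s n, zs n, \<eta>) \<in> relax_set a b xh \<eta> r" unfolding relax_set_def using S1 e by auto
    then have vle: "vt (\<alpha>s n) (zs n) \<eta> \<le> ub xh \<eta> + \<epsilon>'" by (rule r(2))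
    have k0: "0 \<le> k \<xi> \<eta>" "k \<xi> \<eta> \<le> k1" using kb[OF \<xi> e] by auto
    have "k \<xi> \<eta> * vt (\<alpha>s n) (zs n) \<eta> \<le> k \<xi> \<eta> * (ub xh \<eta> + \<epsilon>')" using mult_left_mono[OF vle k0(1)] .
    also have "\<dots> = Gf \<eta> + k \<xi> \<eta> * \<epsilon>'" unfolding Gf_def by (simp add: algebra_simps)
    also have "k \<xi> \<eta> * \<epsilon>' \<le> k1 * \<epsilon>'" using k0 \<epsilon>'0 by (intro mult_right_mono) auto
    also have "k1 * \<epsilon>' < \<epsilon>" unfolding \<epsilon>'_def using \<epsilon> k10 by (simp add: field_simps)
    finally have "k \<xi> \<eta> * vt (\<alpha>s n) (zs n) \<eta> < Gf \<eta> + \<epsilon>" by simp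
    then have "Gf \<eta> \<le> hn n \<eta>" "hn n \<eta> < Gf \<eta> + \<epsilon>" unfolding hn_def using \<epsilon> by auto
    then show "dist (hn n \<eta>) (Gf \<eta>) < \<epsilon>" by (simp add: dist_real_def)
  qed
qed

lemma hn_lim: "(\<lambda>n. integral {a..b} (hn n)) \<longlonglongrightarrow> integral {a..b} Gf"
proof (rule dominated_convergence(2)[where h="\<lambda>_. k1 * B"])
  show "\<And>n. hn n integrable_on {a..b}" by (rule hn_int)
  show "(\<lambda>_. k1 * B) integrable_on {a..b}" by (rule integrable_continuous_interval) (rule continuous_on_const)
  show "\<And>n x. x \<in> {a..b} \<Longrightarrow> norm (hn n x) \<le> k1 * B" using hn_bound by simp
  show "\<And>x. x \<in> {a..b} \<Longrightarrow> (\<lambda>n. hn n x) \<longlonglongrightarrow> Gf x" by (rule hn_conv)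
qed

lemma Fn_le: "Fn n \<le> integral {a..b} (hn n)"
  unfolding Fn_def by (rule integral_le[OF int_f hn_int]) (simp add: hn_def)

lemma Rn_lim: "Rn \<longlonglongrightarrow> 0"
proof (rule tendstoI)
  fix \<epsilon> :: real assume \<epsilon>: "0 < \<epsilon>"
  define \<epsilon>' where "\<epsilon>' = \<epsilon> / (B + 1)"
  have \<epsilon>'0: "0 < \<epsilon>'" unfolding \<epsilon>'_def using \<epsilon> B0 by simp
  obtain d where d: "0 < d" "\<And>s t \<eta>. s \<in> {a..b} \<Longrightarrow> t \<in> {a..b} \<Longrightarrow> \<eta> \<in> {a..b} \<Longrightarrow> \<bar>s - t\<bar> < d \<Longrightarrow> \<bar>k s \<eta> - k t \<eta>\<bar> < \<epsilon>'"
    using k_unif[OF \<epsilon>'0] by blast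
  have "\<forall>\<^sub>F n in sequentially. dist (\<eta>s n) \<xi> < d" using S10 d(1) by (simp add: tendsto_iff)
  then show "\<forall>\<^sub>F n in sequentially. dist (Rn n) 0 < \<epsilon>"
  proof (rule eventually_mono)
    fix n assume dn: "dist (\<eta>s n) \<xi> < d"
    have "\<bar>Rn n\<bar> \<le> \<epsilon>' * B" unfolding Rn_def
    proof (rule integral_abs_le_const[OF int_r])
      fix \<eta> assume e: "\<eta> \<in> {a..b}"
      have "\<bar>k (\<eta>s n) \<eta> - k \<xi> \<eta>\<bar> < \<epsilon>'" using d(2)[OF S4 \<xi> e] dn by (simp add: dist_real_def)
      then show "\<bar>(k (\<eta>s n) \<eta> - k \<xi> \<eta>) * vt (\<alpha>s n) (zs n) \<eta>\<bar> \<le> \<epsilon>' * B"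
        unfolding abs_mult using vt_bound[OF e] by (intro mult_mono) auto
    qed
    also have "\<epsilon>' * B < \<epsilon>" unfolding \<epsilon>'_def using \<epsilon> B0 by (simp add: field_simps)
    finally show "dist (Rn n) 0 < \<epsilon>" by simp
  qed
qed

end

context stab_pt begin

lemma Hlim: "(\<lambda>n. H (zs n) (D\<Phi> (zs n)) (\<eta>s n)) \<longlonglongrightarrow> H xh (D\<phi> xh) \<xi>"
proof -
  have dl: "(\<lambda>n. D\<Phi> (zs n)) \<longlonglongrightarrow> D\<Phi> xh"
    using isCont_tendsto_compose[OF _ zlim, of D\<Phi>] D\<Phi>c by (simp add: continuous_on_eq_continuous_at)
  have P: "(\<lambda>n. (zs n, D\<Phi> (zs n), \<eta>s n)) \<longlonglongrightarrow> (xh, D\<Phi> xh, \<xi>)"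
    by (intro tendsto_Pair zlim dl S10)
  have "((\<lambda>n. (\<lambda>(x, p, \<xi>). H x p \<xi>) (zs n, D\<Phi> (zs n), \<eta>s n)) \<longlonglongrightarrow> (\<lambda>(x, p, \<xi>). H x p \<xi>) (xh, D\<Phi> xh, \<xi>))"
    by (rule continuous_on_tendsto_compose[OF H_cont P]) (use \<xi> S4 in \<open>auto intro!: always_eventually\<close>)
  then show ?thesis using D\<Phi>xh by simp
qed

lemma Klim: "(\<lambda>n. Kf (\<eta>s n)) \<longlonglongrightarrow> Kf \<xi>"
  unfolding Kf_def
  by (rule continuous_on_tendsto_compose[OF K_cont S10 \<xi>]) (use S4 in \<open>auto intro!: always_eventually\<close>)

lemma elim_lim: "en \<longlonglongrightarrow> - c \<xi>"
proof (rule tendstoI)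
  fix \<epsilon> :: real assume \<epsilon>: "0 < \<epsilon>"
  have \<epsilon>2: "0 < \<epsilon>/2" using \<epsilon> by simp
  have "\<forall>\<^sub>F \<alpha> in at_right 0. \<forall>\<xi>'\<in>{a..b}. dist (\<alpha> * v \<alpha> x0 \<xi>' + Theta a b k (v \<alpha>) x0 \<xi>') (- c \<xi>') < \<epsilon>/2"
    using ergodic \<epsilon>2 unfolding uniform_limit_iff by blast
  then have ev1: "\<forall>\<^sub>F n in sequentially. \<forall>\<xi>'\<in>{a..b}. dist (\<alpha>s n * v (\<alpha>s n) x0 \<xi>' + Theta a b k (v (\<alpha>s n)) x0 \<xi>') (- c \<xi>') < \<epsilon>/2"
    using S11 unfolding filterlim_iff by blast
  have cl: "(\<lambda>n. c (\<eta>s n)) \<longlonglongrightarrow> c \<xi>"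
    by (rule continuous_on_tendsto_compose[OF c_cont S10 \<xi>]) (use S4 in \<open>auto intro!: always_eventually\<close>)
  then have ev2: "\<forall>\<^sub>F n in sequentially. dist (c (\<eta>s n)) (c \<xi>) < \<epsilon>/2" using \<epsilon>2 unfolding tendsto_iff by blast
  show "\<forall>\<^sub>F n in sequentially. dist (en n) (- c \<xi>) < \<epsilon>"
    using ev1 ev2
  proof eventually_elim
    case (elim n)
    have "dist (en n) (- c (\<eta>s n)) < \<epsilon>/2" using elim(1) S4[of n] unfolding en_def by blast
    then have A: "\<bar>en n - (- c (\<eta>s n))\<bar> < \<epsilon>/2" by (simp only: dist_real_def)
    have B: "\<bar>c (\<eta>s n) - c \<xi>\<bar> < \<epsilon>/2" using elim(2) by (simp only: dist_real_def)
    from A have A1: "en n - (- c (\<eta>s n)) < \<epsilon>/2" "- (en n - (- c (\<eta>s n))) < \<epsilon>/2" by (simp_all only: abs_less_iff)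
    from B have B1: "c (\<eta>s n) - c \<xi> < \<epsilon>/2" "- (c (\<eta>s n) - c \<xi>) < \<epsilon>/2" by (simp_all only: abs_less_iff)
    have "\<bar>en n - (- c \<xi>)\<bar> < \<epsilon>" unfolding abs_less_iff using A1 B1 by linarith
    then show "dist (en n) (- c \<xi>) < \<epsilon>" by (simp only: dist_real_def)
  qed
qed

definition "Lseq n = \<alpha>s n * V n + H (zs n) (D\<Phi> (zs n)) (\<eta>s n) + V n * Kf (\<eta>s n) - (integral {a..b} (hn n) + Rn n) + en n"

lemma Lseq_ev: "\<forall>\<^sub>F n in sequentially. Lseq n \<le> 0"
  using locmax_ev
proof (rule eventually_mono)
  fix n assume lm: "loc_max (\<lambda>y. v (\<alpha>s n) y (\<eta>s n) - \<Phi> y) (zs n)"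
  have "\<alpha>s n * v (\<alpha>s n) (zs n) (\<eta>s n) + H (zs n) (D\<Phi> (zs n)) (\<eta>s n) + Theta a b k (v (\<alpha>s n)) (zs n) (\<eta>s n) \<le> 0"
    by (rule sub[OF S1 \<Phi>1 S4 lm])
  then have "\<alpha>s n * V n + V n * Kf (\<eta>s n) - An n + en n + H (zs n) (D\<Phi> (zs n)) (\<eta>s n) \<le> 0"
    using decomp[of n] by simp
  then show "Lseq n \<le> 0" unfolding Lseq_def using An_split[of n] Fn_le[of n] by simp
qed

lemma Lseq_lim: "Lseq \<longlonglongrightarrow> 0 * U + H xh (D\<phi> xh) \<xi> + U * Kf \<xi> - (integral {a..b} Gf + 0) + - c \<xi>"
  unfolding Lseq_def[abs_def]
  by (intro tendsto_add tendsto_diff tendsto_mult S8 Vlim Hlim Klim hn_lim Rn_lim elim_lim)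

lemma Theta_ub: "Theta a b k ub xh \<xi> = U * Kf \<xi> - integral {a..b} Gf"
proof -
  have i1: "(\<lambda>\<eta>. k \<xi> \<eta> * U) integrable_on {a..b}"
    by (intro integrable_continuous_interval continuous_on_mult kc_slice[OF \<xi>] continuous_on_const)
  have "Theta a b k ub xh \<xi> = integral {a..b} (\<lambda>\<eta>. k \<xi> \<eta> * U - Gf \<eta>)"
    unfolding Theta_def Gf_def U_def by (simp add: right_diff_distrib)
  also have "\<dots> = integral {a..b} (\<lambda>\<eta>. k \<xi> \<eta> * U) - integral {a..b} Gf"
    by (rule integral_diff[OF i1 Gf_int])
  also have "integral {a..b} (\<lambda>\<eta>. k \<xi> \<eta> * U) = Kf \<xi> * U"
    unfolding Kf_def by (rule integral_mult_left)
  finally show ?thesis by simp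
qed

lemma final: "H xh (D\<phi> xh) \<xi> + Theta a b k ub xh \<xi> \<le> c \<xi>"
proof -
  have "0 * U + H xh (D\<phi> xh) \<xi> + U * Kf \<xi> - (integral {a..b} Gf + 0) + - c \<xi> \<le> 0"
    by (rule tendsto_upperbound[OF Lseq_lim Lseq_ev]) simp
  then show ?thesis unfolding Theta_ub by simp
qed

end

lemma Theta_neg: "Theta a b k (\<lambda>x \<xi>. - u x \<xi>) x \<xi> = - Theta a b k u x \<xi>"
proof -
  have "(\<lambda>\<eta>. k \<xi> \<eta> * (- u x \<xi> - - u x \<eta>)) = (\<lambda>\<eta>. - (k \<xi> \<eta> * (u x \<xi> - u x \<eta>)))"
    by (simp add: fun_eq_iff algebra_simps)
  then show ?thesis unfolding Theta_def by simp
qed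

lemma e_cont_gen:
  fixes a b :: real and k :: "real \<Rightarrow> real \<Rightarrow> real" and u :: "real^'d \<Rightarrow> real \<Rightarrow> real"
  assumes k_cont: "continuous_on ({a..b} \<times> {a..b}) (\<lambda>(\<xi>, \<eta>). k \<xi> \<eta>)"
    and uc: "continuous_on (UNIV \<times> {a..b}) (\<lambda>(x, \<xi>). u x \<xi>)"
  shows "continuous_on {a..b} (\<lambda>\<xi>. \<alpha> * u x0 \<xi> + Theta a b k u x0 \<xi>)"
proof -
  have vc: "continuous_on {a..b} (u x0)" by (rule cont_slice_eta[OF uc])
  have c1: "continuous_on ({a..b} \<times> {a..b}) (\<lambda>p. u x0 (fst p))"
    by (rule continuous_on_compose2[OF vc]) (auto intro!: continuous_intros)
  have c2: "continuous_on ({a..b} \<times> {a..b}) (\<lambda>p. u x0 (snd p))"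
    by (rule continuous_on_compose2[OF vc]) (auto intro!: continuous_intros)
  have c3: "continuous_on ({a..b} \<times> {a..b}) (\<lambda>p. k (fst p) (snd p))"
    using k_cont by (simp add: case_prod_beta)
  have "continuous_on ({a..b} \<times> cbox a b) (\<lambda>(\<xi>, \<eta>). k \<xi> \<eta> * (u x0 \<xi> - u x0 \<eta>))"
    using continuous_on_mult[OF c3 continuous_on_diff[OF c1 c2]] by (simp add: case_prod_beta)
  from integral_continuous_on_param[OF this]
  have "continuous_on {a..b} (\<lambda>\<xi>. Theta a b k u x0 \<xi>)" unfolding Theta_def by simp
  then show ?thesis by (intro continuous_on_add continuous_on_mult continuous_on_const vc)
qed

context stab begin

lemma Sr_tendsto:
  assumes "\<xi> \<in> {a..b}"
  shows "(Sr x \<xi> \<longlongrightarrow> ereal (ub x \<xi>)) (at_right 0)"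
proof -
  have "(Sr x \<xi> \<longlongrightarrow> (INF r\<in>{0<..}. Sr x \<xi> r)) (at_right 0)"
  proof (rule order_tendstoI)
    fix y assume y: "y < (INF r\<in>{0<..}. Sr x \<xi> r)"
    show "\<forall>\<^sub>F r in at_right 0. y < Sr x \<xi> r"
      using eventually_at_right_less[of "0::real"]
    proof (rule eventually_mono)
      fix r :: real assume "0 < r"
      then have "(INF r\<in>{0<..}. Sr x \<xi> r) \<le> Sr x \<xi> r" by (intro INF_lower) auto
      then show "y < Sr x \<xi> r" using y by simp
    qed
  next
    fix y assume y: "(INF r\<in>{0<..}. Sr x \<xi> r) < y"
    then obtain r0 where r0: "0 < r0" "Sr x \<xi> r0 < y" by (auto simp: INF_less_iff)
    have "\<forall>\<^sub>F r in at_right 0. r < r0" using r0(1) by (simp add: eventually_at_right_field) (blast intro: exI[of _ r0])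
    then show "\<forall>\<^sub>F r in at_right 0. Sr x \<xi> r < y"
    proof (rule eventually_mono)
      fix r assume "r < r0"
      then show "Sr x \<xi> r < y" using Sr_mono[of r r0 x \<xi>] r0 by simp
    qed
  qed
  then show ?thesis using upper_relax_eq[OF assms, of x] ub_ereal(1)[OF assms, of x] by simp
qed

lemma ub_eq: "ub = (\<lambda>x \<xi>. real_of_ereal (upper_relax a b v x0 x \<xi>))"
  by (simp add: fun_eq_iff ub_def)

lemma stab_conclusion:
  "(\<forall>x. \<forall>\<xi>\<in>{a..b}. \<bar>upper_relax a b v x0 x \<xi>\<bar> \<noteq> \<infinity>)
   \<and> visc_sub a b H k c (\<lambda>x \<xi>. real_of_ereal (upper_relax a b v x0 x \<xi>))"
proof
  show "\<forall>x. \<forall>\<xi>\<in>{a..b}. \<bar>upper_relax a b v x0 x \<xi>\<bar> \<noteq> \<infinity>"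
  proof (intro allI ballI)
    fix x \<xi> assume "\<xi> \<in> {a..b}"
    then show "\<bar>upper_relax a b v x0 x \<xi>\<bar> \<noteq> \<infinity>" using ub_ereal(1)[of \<xi> x] by simp
  qed
  show "visc_sub a b H k c (\<lambda>x \<xi>. real_of_ereal (upper_relax a b v x0 x \<xi>))"
    unfolding visc_sub_def ub_eq[symmetric]
  proof (intro allI impI)
    fix \<phi> D\<phi> \<xi> xh
    assume \<phi>: "C1_torus \<phi> D\<phi>" and \<xi>: "\<xi> \<in> {a..b}" and lm: "loc_max (\<lambda>y. ub y \<xi> - \<phi> y) xh"
    obtain e where e: "0 < e" "\<And>y. dist y xh < e \<Longrightarrow> ub y \<xi> - \<phi> y \<le> ub xh \<xi> - \<phi> xh"
      using lm unfolding loc_max_def by blast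
    obtain \<alpha>s \<eta>s ys where S:
      "\<And>n. 0 < \<alpha>s n" "\<And>n. \<alpha>s n \<le> rr n" "\<And>n. \<alpha>s n \<le> \<alpha>0" "\<And>n. \<eta>s n \<in> {a..b}"
      "\<And>n. dist xh (ys n) \<le> rr n" "\<And>n. \<bar>\<xi> - \<eta>s n\<bar> \<le> rr n"
      "\<And>n. ub xh \<xi> - rr n < vt (\<alpha>s n) (ys n) (\<eta>s n)"
      "\<alpha>s \<longlonglongrightarrow> 0" "ys \<longlonglongrightarrow> xh" "\<eta>s \<longlonglongrightarrow> \<xi>" "filterlim \<alpha>s (at_right 0) sequentially"
      by (rule seq_setup[OF \<xi>, of xh]) blast
    have "stab_pt a b H k v c x0 k1 \<alpha>0 B \<phi> D\<phi> \<xi> xh e \<alpha>s ys \<eta>s"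
    proof (rule stab_pt.intro[OF stab_axioms])
      show "stab_pt_axioms a b v x0 \<alpha>0 \<phi> D\<phi> \<xi> xh e \<alpha>s ys \<eta>s"
        by (rule stab_pt_axioms.intro[OF \<phi> \<xi> e(1) e(2) S(1) S(2) S(3) S(4) S(5) S(6) S(7) S(8) S(9) S(10) S(11)])
    qed
    then show "H xh (D\<phi> xh) \<xi> + Theta a b k ub xh \<xi> \<le> c \<xi>" by (rule stab_pt.final)
  qed
qed

end

theorem mainTheorem11:
  fixes a b :: real
    and H :: "real^'d \<Rightarrow> real^'d \<Rightarrow> real \<Rightarrow> real"
    and k :: "real \<Rightarrow> real \<Rightarrow> real"
    and v :: "real \<Rightarrow> real^'d \<Rightarrow> real \<Rightarrow> real"
    and c :: "real \<Rightarrow> real"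
    and x0 :: "real^'d"
    and k0 k1 C1 C2 m :: real
  assumes I_len: "b - a = 1"
    and H_cont: "continuous_on (UNIV \<times> UNIV \<times> {a..b}) (\<lambda>(x, p, \<xi>). H x p \<xi>)"
    and H_per: "\<And>p \<xi>. Zperiodic (\<lambda>x. H x p \<xi>)"
    and B1: "C1 > 0" "C2 > 0" "m > 1"
        "\<And>x p \<xi>. \<xi> \<in> {a..b} \<Longrightarrow> C1 * norm p powr m - C2 \<le> H x p \<xi>"
    and B2: "\<And>R. R > 0 \<Longrightarrow> \<exists>\<omega>. modulus \<omega> \<and>
        (\<forall>x y p \<xi>. norm p \<le> R \<longrightarrow> \<xi> \<in> {a..b} \<longrightarrow> \<bar>H x p \<xi> - H y p \<xi>\<bar> \<le> \<omega> (dist x y))"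
    and k_cont: "continuous_on ({a..b} \<times> {a..b}) (\<lambda>(\<xi>, \<eta>). k \<xi> \<eta>)"
    and k_bounds: "0 < k0" "k0 \<le> k1"
        "\<And>\<xi> \<eta>. \<xi> \<in> {a..b} \<Longrightarrow> \<eta> \<in> {a..b} \<Longrightarrow> k0 \<le> k \<xi> \<eta> \<and> k \<xi> \<eta> \<le> k1"
    and v_sol: "\<And>\<alpha>. \<alpha> > 0 \<Longrightarrow> DP_solution a b H k \<alpha> (v \<alpha>)"
    and ergodic: "uniform_limit {a..b}
        (\<lambda>\<alpha> \<xi>. \<alpha> * v \<alpha> x0 \<xi> + Theta a b k (v \<alpha>) x0 \<xi>) (\<lambda>\<xi>. - c \<xi>) (at_right 0)"
  shows "(\<forall>x. \<forall>\<xi>\<in>{a..b}. \<bar>upper_relax a b v x0 x \<xi>\<bar> \<noteq> \<infinity>)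
      \<and> visc_sub a b H k c (\<lambda>x \<xi>. real_of_ereal (upper_relax a b v x0 x \<xi>))
      \<and> (\<forall>x. \<forall>\<xi>\<in>{a..b}. \<bar>lower_relax a b v x0 x \<xi>\<bar> \<noteq> \<infinity>)
      \<and> visc_super a b H k c (\<lambda>x \<xi>. real_of_ereal (lower_relax a b v x0 x \<xi>))"
proof -
  have ab: "a \<le> b" using I_len by simp
  have vcont: "\<And>\<alpha>. 0 < \<alpha> \<Longrightarrow> continuous_on (UNIV \<times> {a..b}) (\<lambda>(x, \<xi>). v \<alpha> x \<xi>)"
    using v_sol unfolding DP_solution_def by blast
  have vsub: "\<And>\<alpha> \<phi> D\<phi> \<xi> xh. 0 < \<alpha> \<Longrightarrow> C1_torus \<phi> D\<phi> \<Longrightarrow> \<xi> \<in> {a..b} \<Longrightarrow>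
        loc_max (\<lambda>y. v \<alpha> y \<xi> - \<phi> y) xh \<Longrightarrow>
        \<alpha> * v \<alpha> xh \<xi> + H xh (D\<phi> xh) \<xi> + Theta a b k (v \<alpha>) xh \<xi> \<le> 0"
    using v_sol unfolding DP_solution_def by blast
  have vsup: "\<And>\<alpha> \<phi> D\<phi> \<xi> xh. 0 < \<alpha> \<Longrightarrow> C1_torus \<phi> D\<phi> \<Longrightarrow> \<xi> \<in> {a..b} \<Longrightarrow>
        loc_min (\<lambda>y. v \<alpha> y \<xi> - \<phi> y) xh \<Longrightarrow>
        \<alpha> * v \<alpha> xh \<xi> + H xh (D\<phi> xh) \<xi> + Theta a b k (v \<alpha>) xh \<xi> \<ge> 0"
    using v_sol unfolding DP_solution_def by blast
  have kb: "\<And>\<xi> \<eta>. \<xi> \<in> {a..b} \<Longrightarrow> \<eta> \<in> {a..b} \<Longrightarrow> 0 \<le> k \<xi> \<eta> \<and> k \<xi> \<eta> \<le> k1"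
    using k_bounds by fastforce
  have k10: "0 \<le> k1" using k_bounds by simp
  define e where "e = (\<lambda>\<alpha> \<xi>. \<alpha> * v \<alpha> x0 \<xi> + Theta a b k (v \<alpha>) x0 \<xi>)"
  have "\<forall>\<^sub>F \<alpha> in at_right 0. \<forall>\<xi>\<in>{a..b}. dist (e \<alpha> \<xi>) (- c \<xi>) < 1"
    using ergodic unfolding uniform_limit_iff e_def by simp
  then obtain \<alpha>1 where \<alpha>1: "0 < \<alpha>1" "\<And>\<alpha>. 0 < \<alpha> \<Longrightarrow> \<alpha> < \<alpha>1 \<Longrightarrow> \<forall>\<xi>\<in>{a..b}. dist (e \<alpha> \<xi>) (- c \<xi>) < 1"
    unfolding eventually_at_right_field by auto
  define \<alpha>0 where "\<alpha>0 = min (\<alpha>1/2) 1"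
  have \<alpha>0: "0 < \<alpha>0" "\<alpha>0 < \<alpha>1" "\<alpha>0 \<le> 1" unfolding \<alpha>0_def using \<alpha>1 by auto
  have ec: "continuous_on {a..b} (e \<alpha>0)"
    unfolding e_def by (rule e_cont_gen[OF k_cont vcont[OF \<alpha>0(1)]])
  have "bounded (e \<alpha>0 ` {a..b})" by (rule compact_imp_bounded[OF compact_continuous_image[OF ec compact_Icc]])
  then obtain M where M': "\<forall>\<xi>\<in>{a..b}. \<bar>e \<alpha>0 \<xi>\<bar> \<le> M" unfolding bounded_iff by auto
  then have M: "\<And>\<xi>. \<xi> \<in> {a..b} \<Longrightarrow> \<bar>e \<alpha>0 \<xi>\<bar> \<le> M" by blast
  have M0: "0 \<le> M" using M[of a] ab by auto
  have cb: "\<bar>c \<xi>\<bar> \<le> M + 1" if "\<xi> \<in> {a..b}" for \<xi>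
  proof -
    have d: "\<bar>e \<alpha>0 \<xi> + c \<xi>\<bar> < 1" using \<alpha>1(2)[OF \<alpha>0(1,2)] that by (auto simp: dist_real_def)
    have "\<bar>c \<xi>\<bar> \<le> \<bar>e \<alpha>0 \<xi> + c \<xi>\<bar> + \<bar>e \<alpha>0 \<xi>\<bar>" using abs_triangle_ineq4[of "e \<alpha>0 \<xi> + c \<xi>" "e \<alpha>0 \<xi>"] by simp
    then show ?thesis using d M[OF that] by linarith
  qed
  define E where "E = M + 2"
  have E0: "0 \<le> E" unfolding E_def using M0 by simp
  have Eb: "\<bar>\<alpha> * v \<alpha> x0 \<xi> + Theta a b k (v \<alpha>) x0 \<xi>\<bar> \<le> E"
    if "0 < \<alpha>" "\<alpha> \<le> \<alpha>0" "\<xi> \<in> {a..b}" for \<alpha> \<xi>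
  proof -
    have "dist (e \<alpha> \<xi>) (- c \<xi>) < 1" using \<alpha>1(2)[of \<alpha>] that \<alpha>0 by auto
    then have d: "\<bar>e \<alpha> \<xi> + c \<xi>\<bar> < 1" by (simp add: dist_real_def)
    have "\<bar>e \<alpha> \<xi>\<bar> \<le> \<bar>e \<alpha> \<xi> + c \<xi>\<bar> + \<bar>c \<xi>\<bar>" using abs_triangle_ineq4[of "e \<alpha> \<xi> + c \<xi>" "c \<xi>"] by simp
    then have "\<bar>e \<alpha> \<xi>\<bar> \<le> E" using d cb[OF that(3)] unfolding E_def by linarith
    then show ?thesis unfolding e_def .
  qed
  define D where "D = real CARD('d)"
  define P where "P = 2 * D"
  define Q where "Q = 2 * D"
  define R where "R = (C2 + E) / C1"
  define S where "S = (1 + k1) / C1"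
  define \<beta> where "\<beta> = 1 / m"
  define Bc where "Bc = 2 * (P + Q * ((2*Q*S+1) powr (1/(1-\<beta>))) powr \<beta>
                   + Q * ((2*Q*S+1) powr (1/(1-\<beta>))) powr (\<beta> - 1) * R)"
  have nn: "0 \<le> P" "0 \<le> Q" "0 \<le> R" "0 \<le> S" unfolding P_def Q_def R_def S_def D_def
    using B1 E0 k10 by auto
  have \<beta>: "0 < \<beta>" "\<beta> < 1" unfolding \<beta>_def using B1 by auto
  have vb: "\<bar>v \<alpha> x \<xi> - v \<alpha> x0 \<xi>\<bar> \<le> Bc" if \<alpha>: "0 < \<alpha>" "\<alpha> \<le> \<alpha>0" and \<xi>: "\<xi> \<in> {a..b}" for \<alpha> x \<xi>
  proof -
    have a1: "\<alpha> \<le> 1" using \<alpha> \<alpha>0 by simp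
    show ?thesis
    proof (rule bound_one_alpha[OF I_len B1(1) B1(3) B1(4) k_cont kb v_sol[OF \<alpha>(1)] \<alpha>(1) a1 Eb[OF \<alpha>]])
      fix Om assume Om: "0 \<le> Om"
        "Om \<le> 2 * real CARD('d) + 2 * real CARD('d) * ((C2 + E) / C1 + ((1 + k1) / C1) * Om) powr (1/m)"
        "\<And>x \<xi>. \<xi> \<in> {a..b} \<Longrightarrow> \<bar>v \<alpha> x \<xi> - v \<alpha> x0 \<xi>\<bar> \<le> Om"
      have "Om \<le> P + Q * (R + S * Om) powr \<beta>" using Om(2) unfolding P_def Q_def R_def S_def \<beta>_def D_def .
      then have "Om \<le> Bc" unfolding Bc_def by (rule sublin[OF nn \<beta> Om(1)])
      then show ?thesis using Om(3)[OF \<xi>, of x] by simp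
    qed
  qed
  have st1: "stab a b H k v c x0 k1 \<alpha>0 Bc"
    using I_len H_cont k_cont kb vcont vsub ergodic \<alpha>0(1) vb by (rule stab.intro)
  have part1: "(\<forall>x. \<forall>\<xi>\<in>{a..b}. \<bar>upper_relax a b v x0 x \<xi>\<bar> \<noteq> \<infinity>)
      \<and> visc_sub a b H k c (\<lambda>x \<xi>. real_of_ereal (upper_relax a b v x0 x \<xi>))"
    by (rule stab.stab_conclusion[OF st1])
  define v' where "v' = (\<lambda>\<alpha> x \<xi>. - v \<alpha> x \<xi>)"
  define H' where "H' = (\<lambda>x p \<xi>. - H x (- p) \<xi>)"
  define c' where "c' = (\<lambda>\<xi>. - c \<xi>)"
  have H'_cont: "continuous_on (UNIV \<times> UNIV \<times> {a..b}) (\<lambda>(x, p, \<xi>). H' x p \<xi>)"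
  proof -
    have "continuous_on (UNIV \<times> UNIV \<times> {a..b}) (\<lambda>q. (\<lambda>(x, p, \<xi>). H x p \<xi>) (fst q, - fst (snd q), snd (snd q)))"
      by (rule continuous_on_compose2[OF H_cont]) (auto intro!: continuous_intros)
    then have "continuous_on (UNIV \<times> UNIV \<times> {a..b}) (\<lambda>q. - (\<lambda>(x, p, \<xi>). H x p \<xi>) (fst q, - fst (snd q), snd (snd q)))"
      by (rule continuous_on_minus)
    then show ?thesis unfolding H'_def by (simp add: case_prod_beta)
  qed
  have vcont': "\<And>\<alpha>. 0 < \<alpha> \<Longrightarrow> continuous_on (UNIV \<times> {a..b}) (\<lambda>(x, \<xi>). v' \<alpha> x \<xi>)"
  proof -
    fix \<alpha> :: real assume "0 < \<alpha>"
    from continuous_on_minus[OF vcont[OF this]]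
    show "continuous_on (UNIV \<times> {a..b}) (\<lambda>(x, \<xi>). v' \<alpha> x \<xi>)" unfolding v'_def by (simp add: case_prod_beta)
  qed
  have vsub': "\<alpha> * v' \<alpha> xh \<xi> + H' xh (D\<phi> xh) \<xi> + Theta a b k (v' \<alpha>) xh \<xi> \<le> 0"
    if h: "0 < \<alpha>" "C1_torus \<phi> D\<phi>" "\<xi> \<in> {a..b}" "loc_max (\<lambda>y. v' \<alpha> y \<xi> - \<phi> y) xh" for \<alpha> \<phi> D\<phi> \<xi> xh
  proof -
    have lm: "loc_min (\<lambda>y. v \<alpha> y \<xi> - (- \<phi> y)) xh"
      using h(4) unfolding loc_max_def loc_min_def v'_def by (auto simp: algebra_simps)
    have "\<alpha> * v \<alpha> xh \<xi> + H xh (- D\<phi> xh) \<xi> + Theta a b k (v \<alpha>) xh \<xi> \<ge> 0"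
      using vsup[OF h(1) C1_neg[OF h(2)] h(3) lm] by simp
    moreover have "Theta a b k (v' \<alpha>) xh \<xi> = - Theta a b k (v \<alpha>) xh \<xi>"
      unfolding v'_def by (rule Theta_neg)
    ultimately show ?thesis unfolding v'_def H'_def by simp
  qed
  have ergodic': "uniform_limit {a..b}
        (\<lambda>\<alpha> \<xi>. \<alpha> * v' \<alpha> x0 \<xi> + Theta a b k (v' \<alpha>) x0 \<xi>) (\<lambda>\<xi>. - c' \<xi>) (at_right 0)"
  proof -
    have "uniform_limit {a..b} (\<lambda>\<alpha> \<xi>. - (\<alpha> * v \<alpha> x0 \<xi> + Theta a b k (v \<alpha>) x0 \<xi>)) (\<lambda>\<xi>. - (- c \<xi>)) (at_right 0)"
      by (rule uniform_limit_uminus[OF ergodic])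
    moreover have "(\<lambda>\<alpha> \<xi>. \<alpha> * v' \<alpha> x0 \<xi> + Theta a b k (v' \<alpha>) x0 \<xi>) = (\<lambda>\<alpha> \<xi>. - (\<alpha> * v \<alpha> x0 \<xi> + Theta a b k (v \<alpha>) x0 \<xi>))"
      unfolding v'_def by (simp add: fun_eq_iff Theta_neg)
    ultimately show ?thesis unfolding c'_def by simp
  qed
  have vb': "\<bar>v' \<alpha> x \<xi> - v' \<alpha> x0 \<xi>\<bar> \<le> Bc" if "0 < \<alpha>" "\<alpha> \<le> \<alpha>0" "\<xi> \<in> {a..b}" for \<alpha> x \<xi>
    using vb[OF that, of x] unfolding v'_def by simp
  have st2: "stab a b H' k v' c' x0 k1 \<alpha>0 Bc"
    using I_len H'_cont k_cont kb vcont' vsub' ergodic' \<alpha>0(1) vb' by (rule stab.intro)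
  have part2: "(\<forall>x. \<forall>\<xi>\<in>{a..b}. \<bar>upper_relax a b v' x0 x \<xi>\<bar> \<noteq> \<infinity>)
      \<and> visc_sub a b H' k c' (\<lambda>x \<xi>. real_of_ereal (upper_relax a b v' x0 x \<xi>))"
    by (rule stab.stab_conclusion[OF st2])
  define ub' where "ub' = stab.ub a b v' x0"
  have lower_eq: "lower_relax a b v x0 x \<xi> = ereal (- ub' x \<xi>)" if \<xi>: "\<xi> \<in> {a..b}" for x \<xi>
  proof -
    have T: "(stab.Sr a b v' x0 x \<xi> \<longlongrightarrow> ereal (ub' x \<xi>)) (at_right 0)"
      unfolding ub'_def by (rule stab.Sr_tendsto[OF st2 \<xi>])
    have eq: "(\<lambda>r. INF (\<alpha>, y, \<eta>) \<in> relax_set a b x \<xi> r. ereal (v \<alpha> y \<eta> - v \<alpha> x0 \<eta>)) = (\<lambda>r. - stab.Sr a b v' x0 x \<xi> r)"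
    proof
      fix r
      have "stab.Sr a b v' x0 x \<xi> r = (SUP t \<in> relax_set a b x \<xi> r. - (\<lambda>(\<alpha>, y, \<eta>). ereal (v \<alpha> y \<eta> - v \<alpha> x0 \<eta>)) t)"
        unfolding stab.Sr_def[OF st2] stab.vt_def[OF st2]
        by (intro SUP_cong refl) (auto simp: v'_def split: prod.splits)
      also have "\<dots> = - (INF t \<in> relax_set a b x \<xi> r. (\<lambda>(\<alpha>, y, \<eta>). ereal (v \<alpha> y \<eta> - v \<alpha> x0 \<eta>)) t)"
        by (rule ereal_SUP_uminus_eq)
      finally show "(INF (\<alpha>, y, \<eta>) \<in> relax_set a b x \<xi> r. ereal (v \<alpha> y \<eta> - v \<alpha> x0 \<eta>)) = - stab.Sr a b v' x0 x \<xi> r"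
        by (simp add: ereal_uminus_eq_reorder)
    qed
    have "((\<lambda>r. - stab.Sr a b v' x0 x \<xi> r) \<longlongrightarrow> - ereal (ub' x \<xi>)) (at_right 0)"
      by (rule tendsto_uminus_ereal[OF T])
    then have "Lim (at_right (0::real)) (\<lambda>r. - stab.Sr a b v' x0 x \<xi> r) = - ereal (ub' x \<xi>)"
      by (rule tendsto_Lim[OF trivial_limit_at_right_real])
    then show ?thesis unfolding lower_relax_def eq by simp
  qed
  have ub'_eq: "real_of_ereal (upper_relax a b v' x0 x \<xi>) = ub' x \<xi>" for x \<xi>
    unfolding ub'_def stab.ub_def[OF st2] ..
  have part3: "\<forall>x. \<forall>\<xi>\<in>{a..b}. \<bar>lower_relax a b v x0 x \<xi>\<bar> \<noteq> \<infinity>"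
    using lower_eq by simp
  have part4: "visc_super a b H k c (\<lambda>x \<xi>. real_of_ereal (lower_relax a b v x0 x \<xi>))"
    unfolding visc_super_def
  proof (intro allI impI)
    fix \<psi> D\<psi> \<xi> xh
    assume \<psi>: "C1_torus \<psi> D\<psi>" and \<xi>: "\<xi> \<in> {a..b}"
      and lm: "loc_min (\<lambda>y. real_of_ereal (lower_relax a b v x0 y \<xi>) - \<psi> y) xh"
    have lm': "loc_max (\<lambda>y. real_of_ereal (upper_relax a b v' x0 y \<xi>) - (- \<psi> y)) xh"
      using lm unfolding loc_min_def loc_max_def ub'_eq lower_eq[OF \<xi>] by (auto simp: algebra_simps)
    have "H' xh (- D\<psi> xh) \<xi> + Theta a b k (\<lambda>x \<xi>. real_of_ereal (upper_relax a b v' x0 x \<xi>)) xh \<xi> \<le> c' \<xi>"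
      using part2 C1_neg[OF \<psi>] \<xi> lm' unfolding visc_sub_def by blast
    moreover have "Theta a b k (\<lambda>x \<xi>. real_of_ereal (lower_relax a b v x0 x \<xi>)) xh \<xi>
        = - Theta a b k (\<lambda>x \<xi>. real_of_ereal (upper_relax a b v' x0 x \<xi>)) xh \<xi>"
    proof -
      have "Theta a b k (\<lambda>x \<xi>. real_of_ereal (lower_relax a b v x0 x \<xi>)) xh \<xi>
          = Theta a b k (\<lambda>x \<xi>. - real_of_ereal (upper_relax a b v' x0 x \<xi>)) xh \<xi>"
        unfolding Theta_def
        by (rule integral_cong) (use \<xi> in \<open>simp add: lower_eq ub'_eq\<close>)
      then show ?thesis by (simp add: Theta_neg)
    qed
    ultimately show "H xh (D\<psi> xh) \<xi> + Theta a b k (\<lambda>x \<xi>. real_of_ereal (lower_relax a b v x0 x \<xi>)) xh \<xi> \<ge> c \<xi>"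
      unfolding H'_def c'_def by simp
  qed
  have p1a: "\<forall>x. \<forall>\<xi>\<in>{a..b}. \<bar>upper_relax a b v x0 x \<xi>\<bar> \<noteq> \<infinity>" using part1 by (rule conjunct1)
  have p1b: "visc_sub a b H k c (\<lambda>x \<xi>. real_of_ereal (upper_relax a b v x0 x \<xi>))" using part1 by (rule conjunct2)
  show ?thesis by (intro conjI p1a p1b part3 part4)
qed

end
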